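(* For every $i\in\{1,\dots,n\}$, in ${\mathcal U}_D^{\ge0}\otimes{\mathcal U}_D^{\ge0}$, $$\Delta(x_i)=K_{-\deg(x_i)}\otimes x_i+x_i\otimes1+\hat q\sum_{j=i+1}^nE_{j\downarrow i+1}K_{-\deg(x_j)}\otimes x_j,$$ $$\Delta(y_i)=K_{-\deg(y_i)}\otimes y_i+y_i\otimes1+\hat q\Big(\sum_{j=1}^n\epsilon_{ij}K_{-\deg(x_j)}\otimes x_j+\sum_{j=1}^{i-1}E_{j+1\uparrow i}K_{-\deg(y_j)}\otimes y_j\Big).$$
   Context: Let $k$ be an algebraically closed field of characteristic $0$ and $q\in k^\times$ not a root of unity; $\hat q=q-q^{-1}$; $n\ge3$. Let $Q(D_{n+1})$ be the lattice of $(a_1,\dots,a_{n+1})\in\mathbb Z^{n+1}$ with even coordinate sum, standard inner product, simple roots $\alpha_1=e_1+e_2$, $\alpha_i=e_i-e_{i-1}$ ($2\le i\le n+1$), reflections $s_i$. Write $[u,v]=uv-q^{-1}vu$. ${\mathcal U}_q(\mathfrak{so}_{2n+2})$ is generated by $E_i,F_i,K_\mu$ with the standard relations ($K_0=1$, $K_\mu K_\lambda=K_{\mu+\lambda}$, $K_\mu E_iK_{-\mu}=q^{\langle\mu,\alpha_i\rangle}E_i$, $K_\mu F_iK_{-\mu}=q^{-\langle\mu,\alpha_i\rangle}F_i$, $E_iE_j=E_jE_i$ if $\langle\alpha_i,\alpha_j\rangle\in\{0,2\}$, $E_i[E_i,E_j]=q[E_i,E_j]E_i$ if $\langle\alpha_i,\alpha_j\rangle=-1$,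 same for $F$'s, $E_iF_j-F_jE_i=\delta_{ij}(K_{\alpha_i}-K_{-\alpha_i})/\hat q$), Hopf structure $\Delta(E_i)=K_{-\alpha_i}\otimes E_i+E_i\otimes1$, $\Delta(K_\mu)=K_\mu\otimes K_\mu$, and Lusztig automorphisms $T_i$ ($T_iK_\mu=K_{s_i\mu}$, $T_iE_i=-F_iK_{\alpha_i}$, $T_iE_j=E_j$ if $\langle\alpha_i,\alpha_j\rangle=0$, $T_iE_j=E_iE_j-q^{-1}E_jE_i$ if $\langle\alpha_i,\alpha_j\rangle=-1$). ${\mathcal U}_D^{\ge0}$ is the Hopf subalgebra generated by all $E_i$ and $K_\mu$. Root vectors of $w_n=(s_{n+1}\cdots s_1)(s_3\cdots s_{n+1})$ (defined via $X_{\beta_\ell}=T_{i_1}\cdots T_{i_{\ell-1}}E_{i_\ell}$ for the reduced word $s_{i_1}\cdots s_{i_{2n}}$) are $x_i=X_{e_{n+1}-e_i}$, $y_i=X_{e_{n+1}+e_i}$, with degrees $\deg(x_i)=e_{n+1}-e_i$, $\deg(y_i)=e_{n+1}+e_i$; they satisfy $x_n=E_{n+1}$, $x_i=[x_{i+1},E_{i+1}]$, $y_1=[x_2,E_1]$, $y_{i+1}=[y_i,E_{i+1}]$. For $r\ge s$ in $\{1,\dots,n+1\}$ define $E_{r\downarrow r}=E_r$, $E_{r\downarrow s}=[E_{r\downarrow s+1},E_s]$ ($r\ne s$), $E_{s\uparrow s}=E_s$, $E_{s\uparrow r}=[E_{s\uparrow r-1},E_r]$ ($r\ne s$). For $i,j\in\{1,\dots,n\}$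 define $\epsilon_{11}=0$, $\epsilon_{1j}=T_jT_{j-1}\cdots T_2E_1$ ($j\ne1$), and $\epsilon_{i+1,j}=[\epsilon_{ij},E_{i+1}]$ if $j\ne i,i+1$; $\epsilon_{i+1,i+1}=q\epsilon_{i,i+1}E_{i+1}-q^{-1}E_{i+1}\epsilon_{i,i+1}$; $\epsilon_{i+1,i}=\epsilon_{i,i+1}+q^{-1}(\epsilon_{ii}E_{i+1}-E_{i+1}\epsilon_{ii})$. *)

theory Defs
  imports Main "HOL-Computational_Algebra.Polynomial"
begin

type_synonym wt = "nat \<Rightarrow> int"

definition unitv :: "nat \<Rightarrow> wt" where
  "unitv i = (\<lambda>j. if j = i then 1 else 0)"

definition wadd :: "wt \<Rightarrow> wt \<Rightarrow> wt" where
  "wadd \<mu> \<nu> = (\<lambda>j. \<mu> j + \<nu> j)"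

definition wneg :: "wt \<Rightarrow> wt" where
  "wneg \<mu> = (\<lambda>j. - \<mu> j)"

definition wzero :: wt where
  "wzero = (\<lambda>j. 0)"

text \<open>The lattice Q(D_{n+1}): integer vectors indexed by 1..n+1 (zero outside) with even coordinate sum.\<close>
definition QD :: "nat \<Rightarrow> wt set" where
  "QD n = {\<mu>. (\<forall>j. j \<notin> {1..n+1} \<longrightarrow> \<mu> j = 0) \<and> even (\<Sum>j=1..n+1. \<mu> j)}"

definition inner :: "nat \<Rightarrow> wt \<Rightarrow> wt \<Rightarrow> int" where
  "inner n \<mu> \<nu> = (\<Sum>j=1..n+1. \<mu> j * \<nu> j)"

definition alpha :: "nat \<Rightarrow> wt" where
  "alpha i = (if i = 1 then wadd (unitv 1) (unitv 2) else wadd (unitv i) (wneg (unitv (i - 1))))"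

definition refl :: "nat \<Rightarrow> nat \<Rightarrow> wt \<Rightarrow> wt" where
  "refl n i \<mu> = (\<lambda>j. \<mu> j - inner n \<mu> (alpha i) * alpha i j)"

text \<open>A k-algebra is modelled as a ring 'a together with a central unital ring homomorphism sc : 'k -> 'a
  (scalar c acts as multiplication by sc c).\<close>
definition kalg :: "('k::field \<Rightarrow> 'a::ring_1) \<Rightarrow> bool" where
  "kalg sc \<longleftrightarrow> (\<forall>a b. sc (a + b) = sc a + sc b) \<and> (\<forall>a b. sc (a * b) = sc a * sc b) \<and> sc 1 = 1
      \<and> (\<forall>c x. sc c * x = x * sc c)"

definition kalg_hom :: "('k::field \<Rightarrow> 'a::ring_1) \<Rightarrow> ('k \<Rightarrow> 'b::ring_1) \<Rightarrow> ('a \<Rightarrow> 'b) \<Rightarrow> bool" where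
  "kalg_hom sa sb f \<longleftrightarrow> (\<forall>x y. f (x + y) = f x + f y) \<and> (\<forall>x y. f (x * y) = f x * f y) \<and> f 1 = 1
      \<and> (\<forall>c. f (sa c) = sb c)"

definition br :: "('k::field \<Rightarrow> 'a::ring_1) \<Rightarrow> 'k \<Rightarrow> 'a \<Rightarrow> 'a \<Rightarrow> 'a" where
  "br sc q u v = u * v - sc (inverse q) * (v * u)"

definition qhat :: "'k::field \<Rightarrow> 'k" where
  "qhat q = q - inverse q"

definition Uq_rels :: "nat \<Rightarrow> 'k::field \<Rightarrow> ('k \<Rightarrow> 'a::ring_1) \<Rightarrow> (nat \<Rightarrow> 'a) \<Rightarrow> (nat \<Rightarrow> 'a)
    \<Rightarrow> (wt \<Rightarrow> 'a) \<Rightarrow> bool" where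
  "Uq_rels n q sc E F K \<longleftrightarrow>
     K wzero = 1
   \<and> (\<forall>\<mu>\<in>QD n. \<forall>\<nu>\<in>QD n. K \<mu> * K \<nu> = K (wadd \<mu> \<nu>))
   \<and> (\<forall>\<mu>\<in>QD n. \<forall>i\<in>{1..n+1}. K \<mu> * E i * K (wneg \<mu>) = sc (q powi inner n \<mu> (alpha i)) * E i)
   \<and> (\<forall>\<mu>\<in>QD n. \<forall>i\<in>{1..n+1}. K \<mu> * F i * K (wneg \<mu>) = sc (q powi (- inner n \<mu> (alpha i))) * F i)
   \<and> (\<forall>i\<in>{1..n+1}. \<forall>j\<in>{1..n+1}. inner n (alpha i) (alpha j) \<in> {0, 2} \<longrightarrow>
        E i * E j = E j * E i \<and> F i * F j = F j * F i)
   \<and> (\<forall>i\<in>{1..n+1}. \<forall>j\<in>{1..n+1}. inner n (alpha i) (alpha j) = -1 \<longrightarrow>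
        E i * br sc q (E i) (E j) = sc q * br sc q (E i) (E j) * E i
      \<and> F i * br sc q (F i) (F j) = sc q * br sc q (F i) (F j) * F i)
   \<and> (\<forall>i\<in>{1..n+1}. \<forall>j\<in>{1..n+1}. E i * F j - F j * E i =
        (if i = j then sc (inverse (qhat q)) * (K (alpha i) - K (wneg (alpha i))) else 0))"

definition lusztig :: "nat \<Rightarrow> 'k::field \<Rightarrow> ('k \<Rightarrow> 'a::ring_1) \<Rightarrow> (nat \<Rightarrow> 'a) \<Rightarrow> (nat \<Rightarrow> 'a)
    \<Rightarrow> (wt \<Rightarrow> 'a) \<Rightarrow> (nat \<Rightarrow> 'a \<Rightarrow> 'a) \<Rightarrow> bool" where
  "lusztig n q sc E F K T \<longleftrightarrow>
     (\<forall>i\<in>{1..n+1}. kalg_hom sc sc (T i) \<and> bij (T i)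
       \<and> (\<forall>\<mu>\<in>QD n. T i (K \<mu>) = K (refl n i \<mu>))
       \<and> T i (E i) = - (F i * K (alpha i))
       \<and> (\<forall>j\<in>{1..n+1}. inner n (alpha i) (alpha j) = 0 \<longrightarrow> T i (E j) = E j)
       \<and> (\<forall>j\<in>{1..n+1}. inner n (alpha i) (alpha j) = -1 \<longrightarrow>
             T i (E j) = E i * E j - sc (inverse q) * (E j * E i)))"

text \<open>Tensor square: a k-algebra 'c with two k-algebra maps i1, i2 : 'a -> 'c whose images commute;
  a (x) b is rendered as i1 a * i2 b.\<close>
definition tensor_data :: "('k::field \<Rightarrow> 'a::ring_1) \<Rightarrow> ('k \<Rightarrow> 'c::ring_1) \<Rightarrow> ('a \<Rightarrow> 'c) \<Rightarrow> ('a \<Rightarrow> 'c) \<Rightarrow> bool" where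
  "tensor_data sa sc i1 i2 \<longleftrightarrow> kalg_hom sa sc i1 \<and> kalg_hom sa sc i2 \<and> (\<forall>a b. i1 a * i2 b = i2 b * i1 a)"

definition tens :: "('a \<Rightarrow> 'c::ring_1) \<Rightarrow> ('a \<Rightarrow> 'c) \<Rightarrow> 'a \<Rightarrow> 'a \<Rightarrow> 'c" where
  "tens i1 i2 a b = i1 a * i2 b"

definition coprod :: "nat \<Rightarrow> ('k::field \<Rightarrow> 'a::ring_1) \<Rightarrow> ('k \<Rightarrow> 'c::ring_1) \<Rightarrow> (nat \<Rightarrow> 'a) \<Rightarrow> (wt \<Rightarrow> 'a)
    \<Rightarrow> ('a \<Rightarrow> 'c) \<Rightarrow> ('a \<Rightarrow> 'c) \<Rightarrow> ('a \<Rightarrow> 'c) \<Rightarrow> bool" where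
  "coprod n sa sc E K i1 i2 \<Delta> \<longleftrightarrow> kalg_hom sa sc \<Delta>
     \<and> (\<forall>\<mu>\<in>QD n. \<Delta> (K \<mu>) = tens i1 i2 (K \<mu>) (K \<mu>))
     \<and> (\<forall>i\<in>{1..n+1}. \<Delta> (E i) = tens i1 i2 (K (wneg (alpha i))) (E i) + tens i1 i2 (E i) 1)"

text \<open>xr m = x_{n-m}: x_n = E_{n+1}, x_i = [x_{i+1}, E_{i+1}].\<close>
fun xr :: "('k::field \<Rightarrow> 'a::ring_1) \<Rightarrow> 'k \<Rightarrow> (nat \<Rightarrow> 'a) \<Rightarrow> nat \<Rightarrow> nat \<Rightarrow> 'a" where
  "xr sc q E n 0 = E (n + 1)"
| "xr sc q E n (Suc m) = br sc q (xr sc q E n m) (E (n - m))"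

definition xv :: "('k::field \<Rightarrow> 'a::ring_1) \<Rightarrow> 'k \<Rightarrow> (nat \<Rightarrow> 'a) \<Rightarrow> nat \<Rightarrow> nat \<Rightarrow> 'a" where
  "xv sc q E n i = xr sc q E n (n - i)"

fun yv :: "('k::field \<Rightarrow> 'a::ring_1) \<Rightarrow> 'k \<Rightarrow> (nat \<Rightarrow> 'a) \<Rightarrow> nat \<Rightarrow> nat \<Rightarrow> 'a" where
  "yv sc q E n 0 = 0"
| "yv sc q E n (Suc 0) = br sc q (xv sc q E n 2) (E 1)"
| "yv sc q E n (Suc (Suc i)) = br sc q (yv sc q E n (Suc i)) (E (Suc (Suc i)))"

definition degx :: "nat \<Rightarrow> nat \<Rightarrow> wt" where
  "degx n i = wadd (unitv (n + 1)) (wneg (unitv i))"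

definition degy :: "nat \<Rightarrow> nat \<Rightarrow> wt" where
  "degy n i = wadd (unitv (n + 1)) (unitv i)"

text \<open>Edn r d = E_{r \<down> r-d}; Edown r s = E_{r \<down> s} for r >= s.\<close>
fun Edn :: "('k::field \<Rightarrow> 'a::ring_1) \<Rightarrow> 'k \<Rightarrow> (nat \<Rightarrow> 'a) \<Rightarrow> nat \<Rightarrow> nat \<Rightarrow> 'a" where
  "Edn sc q E r 0 = E r"
| "Edn sc q E r (Suc d) = br sc q (Edn sc q E r d) (E (r - Suc d))"

definition Edown :: "('k::field \<Rightarrow> 'a::ring_1) \<Rightarrow> 'k \<Rightarrow> (nat \<Rightarrow> 'a) \<Rightarrow> nat \<Rightarrow> nat \<Rightarrow> 'a" where
  "Edown sc q E r s = Edn sc q E r (r - s)"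

text \<open>Eupd s d = E_{s \<up> s+d}; Eup s r = E_{s \<up> r} for r >= s.\<close>
fun Eupd :: "('k::field \<Rightarrow> 'a::ring_1) \<Rightarrow> 'k \<Rightarrow> (nat \<Rightarrow> 'a) \<Rightarrow> nat \<Rightarrow> nat \<Rightarrow> 'a" where
  "Eupd sc q E s 0 = E s"
| "Eupd sc q E s (Suc d) = br sc q (Eupd sc q E s d) (E (s + Suc d))"

definition Eup :: "('k::field \<Rightarrow> 'a::ring_1) \<Rightarrow> 'k \<Rightarrow> (nat \<Rightarrow> 'a) \<Rightarrow> nat \<Rightarrow> nat \<Rightarrow> 'a" where
  "Eup sc q E s r = Eupd sc q E s (r - s)"

fun Tch :: "(nat \<Rightarrow> 'a \<Rightarrow> 'a) \<Rightarrow> nat \<Rightarrow> 'a \<Rightarrow> 'a" where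
  "Tch T 0 a = a"
| "Tch T (Suc 0) a = a"
| "Tch T (Suc (Suc m)) a = T (Suc (Suc m)) (Tch T (Suc m) a)"

fun eps :: "('k::field \<Rightarrow> 'a::ring_1) \<Rightarrow> 'k \<Rightarrow> (nat \<Rightarrow> 'a) \<Rightarrow> (nat \<Rightarrow> 'a \<Rightarrow> 'a) \<Rightarrow> nat \<Rightarrow> nat \<Rightarrow> 'a" where
  "eps sc q E T 0 j = 0"
| "eps sc q E T (Suc 0) j = (if j = 1 then 0 else Tch T j (E 1))"
| "eps sc q E T (Suc (Suc i)) j =
     (if j = Suc (Suc i) then
        sc q * eps sc q E T (Suc i) (Suc (Suc i)) * E (Suc (Suc i))
        - sc (inverse q) * (E (Suc (Suc i)) * eps sc q E T (Suc i) (Suc (Suc i)))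
      else if j = Suc i then
        eps sc q E T (Suc i) (Suc (Suc i))
        + sc (inverse q) * (eps sc q E T (Suc i) (Suc i) * E (Suc (Suc i))
                            - E (Suc (Suc i)) * eps sc q E T (Suc i) (Suc i))
      else br sc q (eps sc q E T (Suc i) j) (E (Suc (Suc i))))"

definition alg_closed :: "'k::field itself \<Rightarrow> bool" where
  "alg_closed _ \<longleftrightarrow> (\<forall>p :: 'k poly. degree p \<ge> 1 \<longrightarrow> (\<exists>z. poly p z = 0))"

end

theory Submission
  imports Defs
begin

lemma addhom_lemmas:
  fixes f :: "'a::ring_1 \<Rightarrow> 'b::ring_1"
  assumes "\<forall>x y. f (x + y) = f x + (f y :: 'b::ring_1)"
  shows "f 0 = 0" "f (- x) = - f x" "f (x - y) = f x - f y"
proof -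
  have h0: "f (0+0) = f 0 + f 0" by (rule assms[rule_format])
  have h: "f 0 = f 0 + f 0" using h0 by (subst (asm) add_0_left)
  have "f 0 + f 0 = f 0 + 0" by (subst add_0_right) (rule h[symmetric])
  then show f0: "f 0 = 0" by (rule add_left_imp_eq)
  have fm: "f (- z) = - f z" for z
  proof -
    have "f z + f (- z) = 0" using assms[rule_format, of z "-z"] f0 by simp
    then show ?thesis by (simp add: minus_unique)
  qed
  then show "f (- x) = - f x" .
  show "f (x - y) = f x - f y" using assms[rule_format, of x "-y"] fm[of y] by simp
qed

lemma inner_wadd_l: "inner n (wadd a b) c = inner n a c + inner n b c"
  by (simp add: inner_def wadd_def sum.distrib distrib_right)
lemma inner_wadd_r: "inner n c (wadd a b) = inner n c a + inner n c b"
  by (simp add: inner_def wadd_def sum.distrib distrib_left)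
lemma inner_wneg_l: "inner n (wneg a) c = - inner n a c"
  by (simp add: inner_def wneg_def sum_negf)
lemma inner_wneg_r: "inner n c (wneg a) = - inner n c a"
  by (simp add: inner_def wneg_def sum_negf)
lemma inner_unitv: "inner n (unitv a) (unitv b) = (if a = b \<and> 1 \<le> a \<and> a \<le> n+1 then 1 else 0)"
proof -
  have "\<And>j. unitv a j * unitv b j = (if j = a then (if a = b then 1 else 0) else 0)"
    by (simp add: unitv_def)
  then show ?thesis by (simp add: inner_def)
qed

lemmas inner_simps = inner_wadd_l inner_wadd_r inner_wneg_l inner_wneg_r inner_unitv

lemma QD_wadd: "a \<in> QD n \<Longrightarrow> b \<in> QD n \<Longrightarrow> wadd a b \<in> QD n"
  by (auto simp: QD_def wadd_def sum.distrib)
lemma QD_wneg: "a \<in> QD n \<Longrightarrow> wneg a \<in> QD n"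
  by (auto simp: QD_def wneg_def sum_negf)
lemma QD_uu: "a \<in> {1..n+1} \<Longrightarrow> b \<in> {1..n+1} \<Longrightarrow> wadd (unitv a) (unitv b) \<in> QD n"
  by (auto simp: QD_def wadd_def unitv_def sum.distrib)
lemma QD_um: "a \<in> {1..n+1} \<Longrightarrow> b \<in> {1..n+1} \<Longrightarrow> wadd (unitv a) (wneg (unitv b)) \<in> QD n"
proof -
  assume a: "a \<in> {1..n+1}" and b: "b \<in> {1..n+1}"
  have "(\<Sum>j=1..n+1. wadd (unitv a) (wneg (unitv b)) j) = (\<Sum>j=1..n+1. unitv a j) - (\<Sum>j=1..n+1. unitv b j)"
    by (simp add: wadd_def wneg_def sum_subtractf[symmetric])
  also have "\<dots> = 0" using a b by (simp add: unitv_def)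
  finally have e: "(\<Sum>j=1..n+1. wadd (unitv a) (wneg (unitv b)) j) = 0" .
  have "\<forall>j. j \<notin> {1..n+1} \<longrightarrow> wadd (unitv a) (wneg (unitv b)) j = 0"
    using a b by (auto simp: wadd_def wneg_def unitv_def)
  then show ?thesis unfolding QD_def mem_Collect_eq
    apply (intro conjI)
     apply assumption
    apply (subst e)
    by simp
qed
lemma QD_alpha: "n \<ge> 1 \<Longrightarrow> m \<in> {1..n+1} \<Longrightarrow> alpha m \<in> QD n"
proof (cases "m = 1")
  case True
  assume "n \<ge> 1"
  then show ?thesis using True unfolding alpha_def by (simp add: QD_uu)
next
  case False
  assume "m \<in> {1..n+1}"
  then have "m - 1 \<in> {1..n+1}" "m \<in> {1..n+1}" using False by auto
  then show ?thesis using False unfolding alpha_def by (simp only: if_False QD_um)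
qed
lemma QD_degx: "j \<in> {1..n+1} \<Longrightarrow> degx n j \<in> QD n"
  unfolding degx_def by (rule QD_um) auto
lemma QD_degy: "j \<in> {1..n+1} \<Longrightarrow> degy n j \<in> QD n"
  unfolding degy_def by (rule QD_uu) auto

locale L =
  fixes n :: nat and q :: "'k::field_char_0" and sa :: "'k \<Rightarrow> 'a::ring_1"
    and E F :: "nat \<Rightarrow> 'a" and K :: "wt \<Rightarrow> 'a" and T :: "nat \<Rightarrow> 'a \<Rightarrow> 'a"
    and sc :: "'k \<Rightarrow> 'c::ring_1" and i1 i2 D :: "'a \<Rightarrow> 'c"
  assumes q0: "q \<noteq> 0" and qroot: "\<forall>m::nat. m > 0 \<longrightarrow> q ^ m \<noteq> 1" and n3: "n \<ge> 3"
    and ksa: "kalg sa" and ksc: "kalg sc" and rels: "Uq_rels n q sa E F K"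
    and lus: "lusztig n q sa E F K T" and td: "tensor_data sa sc i1 i2"
    and cp: "coprod n sa sc E K i1 i2 D"
begin

abbreviation "Q \<equiv> sa q"
abbreviation "P \<equiv> sa (inverse q)"
abbreviation "bra \<equiv> br sa q"

lemma sa_add: "sa (a + b) = sa a + sa b" and sa_mult: "sa (a * b) = sa a * sa b"
  and sa_one: "sa 1 = 1" and sa_c: "sa c * x = x * sa c"
  using ksa unfolding kalg_def by blast+
lemma sa_z: "sa 0 = 0" and sa_diff: "sa (a - b) = sa a - sa b" and sa_uminus: "sa (- a) = - sa a"
  using addhom_lemmas[of sa] sa_add by blast+
lemma sc_add: "sc (a + b) = sc a + sc b" and sc_mult: "sc (a * b) = sc a * sc b"
  and sc_one: "sc 1 = 1" and sc_c: "sc c * y = y * sc c"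
  using ksc unfolding kalg_def by blast+
lemma sc_z: "sc 0 = 0" and sc_diff: "sc (a - b) = sc a - sc b"
  using addhom_lemmas[of sc] sc_add by blast+

lemma i1_add: "i1 (x + y) = i1 x + i1 y" and i1_mult: "i1 (x * y) = i1 x * i1 y"
  and i1_one: "i1 1 = 1" and i1_sa: "i1 (sa c) = sc c"
  and i2_add: "i2 (x + y) = i2 x + i2 y" and i2_mult: "i2 (x * y) = i2 x * i2 y"
  and i2_one: "i2 1 = 1" and i2_sa: "i2 (sa c) = sc c"
  and i12: "i1 x * i2 y = i2 y * i1 x"
  using td by (auto simp: tensor_data_def kalg_hom_def)
lemma i1_diff: "i1 (x - y) = i1 x - i1 y" and i2_diff: "i2 (x - y) = i2 x - i2 y"
  and i1_z: "i1 0 = 0" and i2_z: "i2 0 = 0"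
  using addhom_lemmas[of i1] addhom_lemmas[of i2] i1_add i2_add by auto

lemma D_add: "D (x + y) = D x + D y" and D_mult: "D (x * y) = D x * D y"
  and D_sa: "D (sa c) = sc c"
  using cp by (auto simp: coprod_def kalg_hom_def)
lemma D_diff: "D (x - y) = D x - D y"
  using addhom_lemmas[of D] D_add by auto
lemma D_K: "\<mu> \<in> QD n \<Longrightarrow> D (K \<mu>) = i1 (K \<mu>) * i2 (K \<mu>)"
  using cp by (auto simp: coprod_def tens_def)
lemma D_E: "m \<in> {1..n+1} \<Longrightarrow> D (E m) = i1 (K (wneg (alpha m))) * i2 (E m) + i1 (E m)"
  using cp by (auto simp: coprod_def tens_def i2_one)

lemma RR: "K wzero = 1 \<and> (\<forall>\<mu>\<in>QD n. \<forall>\<nu>\<in>QD n. K \<mu> * K \<nu> = K (wadd \<mu> \<nu>))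
   \<and> (\<forall>\<mu>\<in>QD n. \<forall>i\<in>{1..n+1}. K \<mu> * E i * K (wneg \<mu>) = sa (q powi inner n \<mu> (alpha i)) * E i)
   \<and> (\<forall>\<mu>\<in>QD n. \<forall>i\<in>{1..n+1}. K \<mu> * F i * K (wneg \<mu>) = sa (q powi (- inner n \<mu> (alpha i))) * F i)
   \<and> (\<forall>i\<in>{1..n+1}. \<forall>j\<in>{1..n+1}. inner n (alpha i) (alpha j) \<in> {0, 2} \<longrightarrow>
        E i * E j = E j * E i \<and> F i * F j = F j * F i)
   \<and> (\<forall>i\<in>{1..n+1}. \<forall>j\<in>{1..n+1}. inner n (alpha i) (alpha j) = -1 \<longrightarrow>
        E i * br sa q (E i) (E j) = sa q * br sa q (E i) (E j) * E i
      \<and> F i * br sa q (F i) (F j) = sa q * br sa q (F i) (F j) * F i)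
   \<and> (\<forall>i\<in>{1..n+1}. \<forall>j\<in>{1..n+1}. E i * F j - F j * E i =
        (if i = j then sa (inverse (qhat q)) * (K (alpha i) - K (wneg (alpha i))) else 0))"
  using rels unfolding Uq_rels_def .

lemma K0: "K wzero = 1" using RR by (rule conjunct1)
lemma K_mult: "\<mu> \<in> QD n \<Longrightarrow> \<nu> \<in> QD n \<Longrightarrow> K \<mu> * K \<nu> = K (wadd \<mu> \<nu>)"
  using RR[THEN conjunct2, THEN conjunct1] by blast
lemma KEK: "\<mu> \<in> QD n \<Longrightarrow> m \<in> {1..n+1} \<Longrightarrow> K \<mu> * E m * K (wneg \<mu>) = sa (q powi inner n \<mu> (alpha m)) * E m"
  using RR[THEN conjunct2, THEN conjunct2, THEN conjunct1] by blast

lemma KE: assumes "\<mu> \<in> QD n" "m \<in> {1..n+1}"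
  shows "K \<mu> * E m = sa (q powi inner n \<mu> (alpha m)) * (E m * K \<mu>)"
proof -
  have 1: "K \<mu> * E m * K (wneg \<mu>) = sa (q powi inner n \<mu> (alpha m)) * E m"
    using KEK assms by blast
  have 2: "K (wneg \<mu>) * K \<mu> = 1"
    using K_mult[OF QD_wneg[OF assms(1)] assms(1)] K0
    by (simp add: wadd_def wneg_def wzero_def)
  have "K \<mu> * E m = K \<mu> * E m * K (wneg \<mu>) * K \<mu>" using 2 by (simp add: mult.assoc)
  also have "\<dots> = sa (q powi inner n \<mu> (alpha m)) * (E m * K \<mu>)" using 1 by (simp add: mult.assoc)
  finally show ?thesis .
qed

lemma commE: "a \<in> {1..n+1} \<Longrightarrow> b \<in> {1..n+1} \<Longrightarrow> inner n (alpha a) (alpha b) = 0 \<Longrightarrow> E a * E b = E b * E a"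
  using RR[THEN conjunct2, THEN conjunct2, THEN conjunct2, THEN conjunct2, THEN conjunct1] by blast
lemma serreE: "a \<in> {1..n+1} \<Longrightarrow> b \<in> {1..n+1} \<Longrightarrow> inner n (alpha a) (alpha b) = -1
   \<Longrightarrow> E a * bra (E a) (E b) = Q * bra (E a) (E b) * E a"
  using RR[THEN conjunct2, THEN conjunct2, THEN conjunct2, THEN conjunct2, THEN conjunct2, THEN conjunct1] by blast

lemma LL: "i \<in> {1..n+1} \<Longrightarrow> kalg_hom sa sa (T i) \<and> bij (T i)
       \<and> (\<forall>\<mu>\<in>QD n. T i (K \<mu>) = K (refl n i \<mu>))
       \<and> T i (E i) = - (F i * K (alpha i))
       \<and> (\<forall>j\<in>{1..n+1}. inner n (alpha i) (alpha j) = 0 \<longrightarrow> T i (E j) = E j)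
       \<and> (\<forall>j\<in>{1..n+1}. inner n (alpha i) (alpha j) = -1 \<longrightarrow>
             T i (E j) = E i * E j - sa (inverse q) * (E j * E i))"
  using lus unfolding lusztig_def by (rule bspec)

lemma T_hom: assumes "i \<in> {1..n+1}"
  shows "T i (x + y) = T i x + T i y" "T i (x * y) = T i x * T i y" "T i (sa c) = sa c"
  using LL[OF assms, THEN conjunct1] unfolding kalg_hom_def by blast+
lemma T_diff: "i \<in> {1..n+1} \<Longrightarrow> T i (x - y) = T i x - T i y"
  using addhom_lemmas[of "T i"] T_hom by blast
lemma T_br: "i \<in> {1..n+1} \<Longrightarrow> T i (bra x y) = bra (T i x) (T i y)"
  by (simp add: br_def T_diff T_hom)
lemma T_E0: "i \<in> {1..n+1} \<Longrightarrow> j \<in> {1..n+1} \<Longrightarrow> inner n (alpha i) (alpha j) = 0 \<Longrightarrow> T i (E j) = E j"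
  using LL[THEN conjunct2, THEN conjunct2, THEN conjunct2, THEN conjunct2, THEN conjunct1] by blast
lemma T_E1: "i \<in> {1..n+1} \<Longrightarrow> j \<in> {1..n+1} \<Longrightarrow> inner n (alpha i) (alpha j) = -1 \<Longrightarrow> T i (E j) = bra (E i) (E j)"
  using LL[THEN conjunct2, THEN conjunct2, THEN conjunct2, THEN conjunct2, THEN conjunct2] unfolding br_def by blast

lemma QP: "Q * P = 1" and PQ: "P * Q = 1"
  using q0 by (simp_all flip: sa_mult add: sa_one)

end

context L begin

definition wt_hom :: "'a \<Rightarrow> wt \<Rightarrow> bool" where
  "wt_hom u \<mu> \<longleftrightarrow> (\<forall>\<nu>\<in>QD n. K \<nu> * u = sa (q powi inner n \<nu> \<mu>) * (u * K \<nu>))"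

lemma wt_E: "m \<in> {1..n+1} \<Longrightarrow> wt_hom (E m) (alpha m)"
  by (simp add: wt_hom_def KE)

lemma sa_powi_add: "sa (q powi (a + b)) = sa (q powi a) * sa (q powi b)"
  using q0 by (simp add: power_int_add sa_mult)

lemma wt_mult: assumes "wt_hom u \<mu>" "wt_hom v \<nu>" shows "wt_hom (u * v) (wadd \<mu> \<nu>)"
  unfolding wt_hom_def
proof
  fix w assume w: "w \<in> QD n"
  have "K w * (u * v) = (K w * u) * v" by (simp add: mult.assoc)
  also have "\<dots> = sa (q powi inner n w \<mu>) * (u * (K w * v))" using assms(1) w by (simp add: wt_hom_def mult.assoc)
  also have "\<dots> = sa (q powi inner n w \<mu>) * (u * (sa (q powi inner n w \<nu>) * (v * K w)))" using assms(2) w by (simp add: wt_hom_def)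
  also have "\<dots> = sa (q powi inner n w \<mu>) * sa (q powi inner n w \<nu>) * (u * v * K w)"
    by (metis mult.assoc sa_c)
  finally show "K w * (u * v) = sa (q powi inner n w (wadd \<mu> \<nu>)) * (u * v * K w)"
    by (simp add: inner_wadd_r sa_powi_add)
qed

lemma wt_diff: "wt_hom u \<mu> \<Longrightarrow> wt_hom v \<mu> \<Longrightarrow> wt_hom (u - v) \<mu>"
  by (simp add: wt_hom_def algebra_simps)
lemma wt_add: "wt_hom u \<mu> \<Longrightarrow> wt_hom v \<mu> \<Longrightarrow> wt_hom (u + v) \<mu>"
  by (simp add: wt_hom_def algebra_simps)
lemma wt_0: "wt_hom 0 \<mu>"
  by (simp add: wt_hom_def)
lemma wt_scal: "wt_hom u \<mu> \<Longrightarrow> wt_hom (sa c * u) \<mu>"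
  unfolding wt_hom_def by (metis mult.assoc sa_c)
lemma wt_cong: "wt_hom u \<mu> \<Longrightarrow> \<mu> = \<mu>' \<Longrightarrow> wt_hom u \<mu>'" by simp
lemma wadd_comm: "wadd a b = wadd b a" by (simp add: wadd_def fun_eq_iff add.commute)
lemma wt_br: "wt_hom u \<mu> \<Longrightarrow> wt_hom v \<nu> \<Longrightarrow> wt_hom (bra u v) (wadd \<mu> \<nu>)"
proof -
  assume u: "wt_hom u \<mu>" and v: "wt_hom v \<nu>"
  have 1: "wt_hom (u * v) (wadd \<mu> \<nu>)" by (rule wt_mult[OF u v])
  have 2: "wt_hom (v * u) (wadd \<mu> \<nu>)" using wt_mult[OF v u] wadd_comm by metis
  show ?thesis unfolding br_def by (intro wt_diff 1 wt_scal 2)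
qed
lemma wt_K: assumes "\<mu> \<in> QD n" shows "wt_hom (K \<mu>) wzero"
  unfolding wt_hom_def
proof
  fix w assume "w \<in> QD n"
  then show "K w * K \<mu> = sa (q powi inner n w wzero) * (K \<mu> * K w)"
    using assms by (simp add: K_mult wadd_comm inner_def wzero_def sa_one)
qed

lemma wt_use: "wt_hom u \<mu> \<Longrightarrow> \<nu> \<in> QD n \<Longrightarrow> inner n \<nu> \<mu> = k \<Longrightarrow> K \<nu> * u = sa (q powi k) * (u * K \<nu>)"
  by (simp add: wt_hom_def)

lemma i1_KK: "a \<in> QD n \<Longrightarrow> b \<in> QD n \<Longrightarrow> i1 (K (wneg a)) * i1 (K (wneg b)) = i1 (K (wneg (wadd a b)))"
  by (simp add: i1_mult[symmetric] K_mult QD_wneg) (simp add: wadd_def wneg_def fun_eq_iff)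

lemma bracket:
  assumes Du: "D u = i1 (K (wneg a)) * i2 u + i1 u + R" and a: "a \<in> QD n" and m: "m \<in> {1..n+1}"
  shows "D (bra u (E m)) = i1 (K (wneg (wadd a (alpha m)))) * i2 (bra u (E m)) + i1 (bra u (E m))
   + i1 (K (wneg a) * E m - P * (E m * K (wneg a))) * i2 u
   + i1 (u * K (wneg (alpha m)) - P * (K (wneg (alpha m)) * u)) * i2 (E m)
   + (R * D (E m) - sc (inverse q) * (D (E m) * R))"
proof -
  have al: "alpha m \<in> QD n" using QD_alpha m n3 by auto
  define A where "A = i1 (K (wneg a))"
  define B where "B = i1 (K (wneg (alpha m)))"
  define KK where "KK = i1 (K (wneg (wadd a (alpha m))))"
  have AB: "A * B = KK" unfolding A_def B_def KK_def using i1_KK[OF a al] .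
  have BA: "B * A = KK" unfolding A_def B_def KK_def using i1_KK[OF al a] by (simp add: wadd_comm)
  have De: "D (E m) = B * i2 (E m) + i1 (E m)" using D_E[OF m] by (simp add: B_def)
  have 1: "D u * D (E m) = KK * i2 (u * E m) + i1 (K (wneg a) * E m) * i2 u
      + i1 (u * K (wneg (alpha m))) * i2 (E m) + i1 (u * E m) + R * D (E m)"
  proof -
    have "D u * D (E m) = A * (i2 u * B) * i2 (E m) + A * (i2 u * i1 (E m)) + i1 u * B * i2 (E m)
       + i1 u * i1 (E m) + R * D (E m)"
      unfolding Du A_def[symmetric] by (simp add: De algebra_simps)
    also have "\<dots> = (A * B) * (i2 u * i2 (E m)) + A * i1 (E m) * i2 u + i1 u * B * i2 (E m)
       + i1 u * i1 (E m) + R * D (E m)"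
      by (simp add: i12[symmetric] A_def B_def mult.assoc)
    also have "\<dots> = KK * (i2 u * i2 (E m)) + A * i1 (E m) * i2 u + i1 u * B * i2 (E m)
       + i1 u * i1 (E m) + R * D (E m)" by (simp only: AB)
    finally show ?thesis by (simp add: i1_mult i2_mult A_def B_def)
  qed
  have 2: "D (E m) * D u = KK * i2 (E m * u) + i1 (E m * K (wneg a)) * i2 u
      + i1 (K (wneg (alpha m)) * u) * i2 (E m) + i1 (E m * u) + D (E m) * R"
  proof -
    have "D (E m) * D u = B * (i2 (E m) * A) * i2 u + B * (i2 (E m) * i1 u) + i1 (E m) * A * i2 u
       + i1 (E m) * i1 u + D (E m) * R"
      unfolding Du A_def[symmetric] by (simp add: De algebra_simps)
    also have "\<dots> = (B * A) * (i2 (E m) * i2 u) + B * i1 u * i2 (E m) + i1 (E m) * A * i2 u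
       + i1 (E m) * i1 u + D (E m) * R"
      by (simp add: i12[symmetric] A_def B_def mult.assoc)
    also have "\<dots> = KK * (i2 (E m) * i2 u) + B * i1 u * i2 (E m) + i1 (E m) * A * i2 u
       + i1 (E m) * i1 u + D (E m) * R" by (simp only: BA)
    finally show ?thesis by (simp add: i1_mult i2_mult A_def B_def)
  qed
  have S1: "\<And>x. sc (inverse q) * i1 x = i1 (P * x)" by (simp add: i1_mult i1_sa)
  have S2: "\<And>x. sc (inverse q) * (KK * i2 x) = KK * i2 (P * x)" by (simp add: i2_mult i2_sa sc_c mult.assoc)
  have "D (bra u (E m)) = D u * D (E m) - sc (inverse q) * (D (E m) * D u)"
    by (simp add: br_def D_diff D_mult D_sa)
  also have "\<dots> = KK * i2 (u * E m) + i1 (K (wneg a) * E m) * i2 u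
      + i1 (u * K (wneg (alpha m))) * i2 (E m) + i1 (u * E m) + R * D (E m)
      - (sc (inverse q) * (KK * i2 (E m * u)) + sc (inverse q) * i1 (E m * K (wneg a)) * i2 u
      + sc (inverse q) * i1 (K (wneg (alpha m)) * u) * i2 (E m) + sc (inverse q) * i1 (E m * u)
      + sc (inverse q) * (D (E m) * R))"
    unfolding 1 2 by (simp add: distrib_left mult.assoc)
  also have "\<dots> = KK * i2 (u * E m) + i1 (K (wneg a) * E m) * i2 u
      + i1 (u * K (wneg (alpha m))) * i2 (E m) + i1 (u * E m) + R * D (E m)
      - (KK * i2 (P * (E m * u)) + i1 (P * (E m * K (wneg a))) * i2 u
      + i1 (P * (K (wneg (alpha m)) * u)) * i2 (E m) + i1 (P * (E m * u))
      + sc (inverse q) * (D (E m) * R))"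
    unfolding S1 S2 by simp
  also have "\<dots> = KK * i2 (bra u (E m)) + i1 (bra u (E m))
   + i1 (K (wneg a) * E m - P * (E m * K (wneg a))) * i2 u
   + i1 (u * K (wneg (alpha m)) - P * (K (wneg (alpha m)) * u)) * i2 (E m)
   + (R * D (E m) - sc (inverse q) * (D (E m) * R))"
    by (simp add: br_def i1_diff i2_diff algebra_simps)
  finally show ?thesis by (simp add: KK_def)
qed

end

context L begin

lemma sc_mid: "sc c * (x * y) = x * (sc c * y)"
  by (metis mult.assoc sc_c)
lemma sc_mid2: "sc a * (sc b * x * y) = x * (sc a * sc b * y)"
  by (metis mult.assoc sc_c)

lemma term_gen:
  assumes m: "m \<in> {1..n+1}"
    and KA: "K (wneg (alpha m)) * A = sa (q powi k) * (A * K (wneg (alpha m)))"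
  shows "i1 A * i2 B * D (E m) - sc (inverse q) * (D (E m) * (i1 A * i2 B))
    = i1 (A * K (wneg (alpha m))) * i2 (B * E m - P * sa (q powi k) * (E m * B)) + i1 (bra A (E m)) * i2 B"
proof -
  define Ka where "Ka = K (wneg (alpha m))"
  have De: "D (E m) = i1 Ka * i2 (E m) + i1 (E m)" using D_E[OF m] by (simp add: Ka_def)
  have X1: "i1 A * i2 B * D (E m) = i1 (A * Ka) * i2 (B * E m) + i1 (A * E m) * i2 B"
    unfolding De by (simp add: distrib_left i1_mult i2_mult mult.assoc) (metis i12 mult.assoc)
  have X2: "D (E m) * (i1 A * i2 B) = i1 (Ka * A) * i2 (E m * B) + i1 (E m * A) * i2 B"
    unfolding De by (simp add: distrib_right i1_mult i2_mult mult.assoc) (metis i12 mult.assoc)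
  have X3: "i1 (Ka * A) = sc (q powi k) * i1 (A * Ka)"
    using KA by (simp add: Ka_def i1_mult i1_sa)
  have X4: "sc (inverse q) * (i1 (Ka * A) * i2 (E m * B)) = i1 (A * Ka) * i2 (P * sa (q powi k) * (E m * B))"
    unfolding X3 by (simp add: i2_mult i2_sa mult.assoc)
      (simp only: sc_mid[of "q powi k" "i1 (A * Ka)"] sc_mid[of "inverse q" "i1 (A * Ka)"])
  have X5: "sc (inverse q) * (i1 (E m * A) * i2 B) = i1 (P * (E m * A)) * i2 B"
    by (simp add: i1_mult i1_sa mult.assoc)
  have "i1 A * i2 B * D (E m) - sc (inverse q) * (D (E m) * (i1 A * i2 B))
     = i1 (A * Ka) * i2 (B * E m) + i1 (A * E m) * i2 B
       - (i1 (A * Ka) * i2 (P * sa (q powi k) * (E m * B)) + i1 (P * (E m * A)) * i2 B)"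
    unfolding X1 X2 distrib_left X4 X5 ..
  also have "\<dots> = i1 (A * Ka) * i2 (B * E m - P * sa (q powi k) * (E m * B)) + i1 (bra A (E m)) * i2 B"
    by (simp add: br_def i1_diff i2_diff algebra_simps)
  finally show ?thesis by (simp add: Ka_def)
qed

lemma sum_bracket:
  assumes m: "m \<in> {1..n+1}"
  shows "(sc c * (\<Sum>j\<in>S. i1 (A j) * i2 (B j))) * D (E m) - sc (inverse q) * (D (E m) * (sc c * (\<Sum>j\<in>S. i1 (A j) * i2 (B j))))
     = sc c * (\<Sum>j\<in>S. i1 (A j) * i2 (B j) * D (E m) - sc (inverse q) * (D (E m) * (i1 (A j) * i2 (B j))))"
proof -
  define De where "De = D (E m)"
  have 1: "(sc c * (\<Sum>j\<in>S. i1 (A j) * i2 (B j))) * De = sc c * (\<Sum>j\<in>S. i1 (A j) * i2 (B j) * De)"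
    by (simp add: mult.assoc sum_distrib_right)
  have 2: "sc (inverse q) * (De * (sc c * (\<Sum>j\<in>S. i1 (A j) * i2 (B j))))
     = sc c * (\<Sum>j\<in>S. sc (inverse q) * (De * (i1 (A j) * i2 (B j))))"
    by (simp add: sum_distrib_left sc_mid[symmetric] flip: mult.assoc) (metis sc_c mult.assoc)
  show ?thesis unfolding De_def[symmetric] 1 2
    by (simp add: sum_subtractf right_diff_distrib)
qed

end

context L begin

abbreviation "x j \<equiv> xv sa q E n j"
abbreviation "y j \<equiv> yv sa q E n j"
abbreviation "Ed r s \<equiv> Edown sa q E r s"
abbreviation "Eu s r \<equiv> Eup sa q E s r"

lemma x_n: "x n = E (n + 1)" by (simp add: xv_def)
lemma x_step: "i < n \<Longrightarrow> x i = bra (x (Suc i)) (E (Suc i))"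
proof -
  assume "i < n"
  then have "n - i = Suc (n - Suc i)" "n - (n - Suc i) = Suc i" by auto
  then show ?thesis by (simp add: xv_def)
qed

lemma Ed_rr: "Ed r r = E r" by (simp add: Edown_def)
lemma Ed_step: "s < r \<Longrightarrow> Ed r s = bra (Ed r (Suc s)) (E s)"
proof -
  assume "s < r"
  then have "r - s = Suc (r - Suc s)" "r - Suc (r - Suc s) = s" by auto
  then show ?thesis by (simp add: Edown_def)
qed

lemma comm_br: "c * u = u * c \<Longrightarrow> c * v = v * c \<Longrightarrow> c * bra u v = bra u v * c"
  unfolding br_def by (simp add: algebra_simps) (metis mult.assoc sa_c)

lemma degx_step: "1 \<le> i \<Longrightarrow> wadd (degx n (Suc i)) (alpha (Suc i)) = degx n i"
  by (auto simp: fun_eq_iff degx_def alpha_def wadd_def wneg_def unitv_def)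

lemma alpha_n1: "alpha (Suc n) = degx n n"
  using n3 by (auto simp: fun_eq_iff degx_def alpha_def wadd_def wneg_def unitv_def)

lemma x_down_induct:
  assumes "j \<le> n" "Pr n" "\<And>i. i < n \<Longrightarrow> Pr (Suc i) \<Longrightarrow> Pr i"
  shows "Pr j"
  using assms(1)
proof (induction "n - j" arbitrary: j)
  case 0
  then have "j = n" by simp
  then show ?case using assms(2) by simp
next
  case (Suc d)
  then have "j < n" "d = n - Suc j" by auto
  then show ?case using Suc assms(3) by simp
qed

lemma wt_x: "1 \<le> j \<Longrightarrow> j \<le> n \<Longrightarrow> wt_hom (x j) (degx n j)"
proof -
  assume j: "1 \<le> j" "j \<le> n"
  have "j \<le> n \<Longrightarrow> 1 \<le> j \<longrightarrow> wt_hom (x j) (degx n j)"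
  proof (rule x_down_induct[where Pr = "\<lambda>j. 1 \<le> j \<longrightarrow> wt_hom (x j) (degx n j)"])
    show "1 \<le> n \<longrightarrow> wt_hom (x n) (degx n n)"
      using wt_E[of "n+1"] by (simp add: x_n alpha_n1)
  next
    fix i assume i: "i < n" "1 \<le> Suc i \<longrightarrow> wt_hom (x (Suc i)) (degx n (Suc i))"
    show "1 \<le> i \<longrightarrow> wt_hom (x i) (degx n i)"
    proof
      assume "1 \<le> i"
      have "wt_hom (bra (x (Suc i)) (E (Suc i))) (wadd (degx n (Suc i)) (alpha (Suc i)))"
        using i by (intro wt_br wt_E) auto
      then show "wt_hom (x i) (degx n i)" using x_step[OF i(1)] degx_step[OF \<open>1 \<le> i\<close>] by simp
    qed
  qed
  then show ?thesis using j by simp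
qed

lemma comm_x: "j \<le> n \<Longrightarrow> (\<And>m. j < m \<Longrightarrow> m \<le> n + 1 \<Longrightarrow> c * E m = E m * c) \<Longrightarrow> c * x j = x j * c"
proof -
  assume j: "j \<le> n" and c: "\<And>m. j < m \<Longrightarrow> m \<le> n + 1 \<Longrightarrow> c * E m = E m * c"
  have "j \<le> n \<Longrightarrow> (\<forall>j'>j. j' \<le> n+1 \<longrightarrow> c * E j' = E j' * c) \<longrightarrow> c * x j = x j * c"
  proof (rule x_down_induct[where Pr = "\<lambda>j. (\<forall>j'>j. j' \<le> n+1 \<longrightarrow> c * E j' = E j' * c) \<longrightarrow> c * x j = x j * c"])
    show "(\<forall>j'>n. j' \<le> n + 1 \<longrightarrow> c * E j' = E j' * c) \<longrightarrow> c * x n = x n * c"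
      by (simp add: x_n)
  next
    fix i assume i: "i < n" "(\<forall>j'>Suc i. j' \<le> n + 1 \<longrightarrow> c * E j' = E j' * c) \<longrightarrow> c * x (Suc i) = x (Suc i) * c"
    show "(\<forall>j'>i. j' \<le> n + 1 \<longrightarrow> c * E j' = E j' * c) \<longrightarrow> c * x i = x i * c"
    proof
      assume h: "\<forall>j'>i. j' \<le> n + 1 \<longrightarrow> c * E j' = E j' * c"
      have "c * x (Suc i) = x (Suc i) * c" using i(2) h by auto
      moreover have "c * E (Suc i) = E (Suc i) * c" using h i(1) by auto
      ultimately show "c * x i = x i * c" unfolding x_step[OF i(1)] by (rule comm_br)
    qed
  qed
  then show ?thesis using j c by auto
qed

lemma wt_Ed: "2 \<le> s \<Longrightarrow> s \<le> r \<Longrightarrow> r \<le> n + 1 \<Longrightarrow> wt_hom (Ed r s) (wadd (unitv r) (wneg (unitv (s - 1))))"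
proof (induction "r - s" arbitrary: s)
  case 0
  then have "s = r" by simp
  moreover have "alpha r = wadd (unitv r) (wneg (unitv (r - 1)))" using 0 by (simp add: alpha_def)
  ultimately show ?case using wt_E[of r] 0 by (simp add: Ed_rr)
next
  case (Suc d)
  then have s: "s < r" "d = r - Suc s" by auto
  then have IH: "wt_hom (Ed r (Suc s)) (wadd (unitv r) (wneg (unitv s)))" using Suc.hyps(1)[of "Suc s"] Suc.prems by auto
  have "wt_hom (bra (Ed r (Suc s)) (E s)) (wadd (wadd (unitv r) (wneg (unitv s))) (alpha s))"
    using Suc s by (intro wt_br IH wt_E) auto
  moreover have "wadd (wadd (unitv r) (wneg (unitv s))) (alpha s) = wadd (unitv r) (wneg (unitv (s - 1)))"
    using Suc s by (auto simp: fun_eq_iff alpha_def wadd_def wneg_def unitv_def)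
  ultimately show ?case using Ed_step[OF s(1)] by simp
qed

lemma braK: "Kd * e = sa c * (e * Kd) \<Longrightarrow> bra (C * Kd) e = (sa c * (C * e) - P * (e * C)) * Kd"
  unfolding br_def by (simp add: algebra_simps) (metis mult.assoc sa_c)

lemma wt_CK: "wt_hom C \<mu> \<Longrightarrow> d \<in> QD n \<Longrightarrow> wt_hom (C * K d) \<mu>"
  using wt_mult[OF _ wt_K] by (metis wadd_def add.right_neutral wzero_def ext)


end

context L begin

lemma inner_degx_alpha_same: "1 \<le> i \<Longrightarrow> i < n \<Longrightarrow> inner n (wneg (degx n (Suc i))) (alpha (Suc i)) = 1"
  by (simp add: inner_simps degx_def alpha_def)
lemma inner_alpha_degx_same: "1 \<le> i \<Longrightarrow> i < n \<Longrightarrow> inner n (wneg (alpha (Suc i))) (degx n (Suc i)) = 1"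
  by (simp add: inner_simps degx_def alpha_def)
lemma inner_alpha_Ed: "1 \<le> i \<Longrightarrow> Suc i < j \<Longrightarrow> j \<le> n \<Longrightarrow>
   inner n (wneg (alpha (Suc i))) (wadd (unitv j) (wneg (unitv (Suc (Suc i) - 1)))) = 1"
  by (simp add: inner_simps alpha_def)
lemma inner_degx_alpha_far: "1 \<le> i \<Longrightarrow> Suc i < j \<Longrightarrow> j \<le> n \<Longrightarrow>
   inner n (wneg (degx n j)) (alpha (Suc i)) = 0"
  by (simp add: inner_simps degx_def alpha_def)
lemma inner_alpha_far: "2 \<le> a \<Longrightarrow> a + 1 < b \<Longrightarrow> b \<le> n + 1 \<Longrightarrow> inner n (alpha a) (alpha b) = 0"
  by (simp add: inner_simps alpha_def) arith

lemma powi1: "sa (q powi 1) = Q" by simp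
lemma powi0: "sa (q powi 0) = 1" by (simp add: sa_one)

lemma XF: "1 \<le> i \<Longrightarrow> i \<le> n \<Longrightarrow> D (x i) = i1 (K (wneg (degx n i))) * i2 (x i) + i1 (x i)
   + sc (qhat q) * (\<Sum>j\<in>{i+1..n}. i1 (Ed j (i+1) * K (wneg (degx n j))) * i2 (x j))"
proof -
  assume i0: "1 \<le> i" "i \<le> n"
  have "i \<le> n \<Longrightarrow> 1 \<le> i \<longrightarrow> D (x i) = i1 (K (wneg (degx n i))) * i2 (x i) + i1 (x i)
   + sc (qhat q) * (\<Sum>j\<in>{i+1..n}. i1 (Ed j (i+1) * K (wneg (degx n j))) * i2 (x j))"
  proof (rule x_down_induct[where Pr = "\<lambda>i. 1 \<le> i \<longrightarrow> D (x i) = i1 (K (wneg (degx n i))) * i2 (x i) + i1 (x i)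
   + sc (qhat q) * (\<Sum>j\<in>{i+1..n}. i1 (Ed j (i+1) * K (wneg (degx n j))) * i2 (x j))"])
    show "1 \<le> n \<longrightarrow> D (x n) = i1 (K (wneg (degx n n))) * i2 (x n) + i1 (x n)
     + sc (qhat q) * (\<Sum>j\<in>{n+1..n}. i1 (Ed j (n+1) * K (wneg (degx n j))) * i2 (x j))"
      using D_E[of "n+1"] by (simp add: x_n alpha_n1)
  next
    fix i assume i: "i < n" and IH: "1 \<le> Suc i \<longrightarrow> D (x (Suc i)) = i1 (K (wneg (degx n (Suc i)))) * i2 (x (Suc i)) + i1 (x (Suc i))
     + sc (qhat q) * (\<Sum>j\<in>{Suc i+1..n}. i1 (Ed j (Suc i+1) * K (wneg (degx n j))) * i2 (x j))"
    show "1 \<le> i \<longrightarrow> D (x i) = i1 (K (wneg (degx n i))) * i2 (x i) + i1 (x i)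
     + sc (qhat q) * (\<Sum>j\<in>{i+1..n}. i1 (Ed j (i+1) * K (wneg (degx n j))) * i2 (x j))"
    proof
      assume i1p: "1 \<le> i"
      define u where "u = x (Suc i)"
      define a where "a = degx n (Suc i)"
      define m where "m = Suc i"
      define Ka where "Ka = K (wneg (alpha m))"
      define A where "A j = Ed j (Suc i + 1) * K (wneg (degx n j))" for j
      define R where "R = sc (qhat q) * (\<Sum>j\<in>{Suc i+1..n}. i1 (A j) * i2 (x j))"
      have m: "m \<in> {1..n+1}" using i by (simp add: m_def)
      have aQ: "a \<in> QD n" using i by (simp add: a_def QD_degx)
      have Du: "D u = i1 (K (wneg a)) * i2 u + i1 u + R"
        using IH by (simp add: u_def a_def R_def A_def)
      note B = bracket[OF Du aQ m]
      have xi: "x i = bra u (E m)" using x_step[OF i] by (simp add: u_def m_def)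
      have f1: "wadd a (alpha m) = degx n i" using degx_step[OF i1p] by (simp add: a_def m_def)
      have f2: "K (wneg a) * E m = Q * (E m * K (wneg a))"
        using KE[OF QD_wneg[OF aQ] m] inner_degx_alpha_same[OF i1p i] by (simp add: a_def m_def)
      have T3: "i1 (K (wneg a) * E m - P * (E m * K (wneg a))) * i2 u
          = sc (qhat q) * (i1 (Ed m m * K (wneg a)) * i2 u)"
        unfolding f2 Ed_rr by (simp add: left_diff_distrib[symmetric] sa_diff[symmetric] i1_mult i1_sa qhat_def mult.assoc)
      have f3: "Ka * u = Q * (u * Ka)"
        using wt_use[OF wt_x[of "Suc i"] QD_wneg[OF QD_alpha[OF _ m]]] inner_alpha_degx_same[OF i1p i] i n3
        by (simp add: u_def Ka_def m_def)
      have T4: "i1 (u * K (wneg (alpha m)) - P * (K (wneg (alpha m)) * u)) * i2 (E m) = 0"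
        unfolding Ka_def[symmetric] f3 by (simp add: mult.assoc[symmetric] PQ i1_z)
      have TS: "R * D (E m) - sc (inverse q) * (D (E m) * R)
          = sc (qhat q) * (\<Sum>j\<in>{Suc i+1..n}. i1 (Ed j (Suc i) * K (wneg (degx n j))) * i2 (x j))"
        unfolding R_def sum_bracket[OF m]
      proof (rule arg_cong[where f = "\<lambda>z. sc (qhat q) * z"], rule sum.cong[OF refl])
        fix j assume j: "j \<in> {Suc i + 1..n}"
        have jQ: "wneg (degx n j) \<in> QD n" using j by (intro QD_wneg QD_degx) auto
        have KA: "Ka * A j = sa (q powi 1) * (A j * Ka)"
          unfolding A_def Ka_def
          using wt_use[OF wt_CK[OF wt_Ed[of "Suc i + 1" j] jQ] QD_wneg[OF QD_alpha[OF _ m]]] j n3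
            inner_alpha_Ed[OF i1p, of j]
          by (simp add: m_def)
        have cx: "E m * x j = x j * E m"
        proof (rule comm_x)
          show "j \<le> n" using j by simp
          fix m' assume "j < m'" "m' \<le> n + 1"
          then show "E m * E m' = E m' * E m"
            using j i1p by (intro commE inner_alpha_far) (auto simp: m_def)
        qed
        have KdE: "K (wneg (degx n j)) * E m = sa (q powi 0) * (E m * K (wneg (degx n j)))"
          using KE[OF jQ m] inner_degx_alpha_far[OF i1p, of j] j by (simp add: m_def)
        have bA: "bra (A j) (E m) = Ed j (Suc i) * K (wneg (degx n j))"
          unfolding A_def braK[OF KdE] powi0 using Ed_step[of "Suc i" j] j
          by (simp add: br_def m_def)
        show "i1 (A j) * i2 (x j) * D (E m) - sc (inverse q) * (D (E m) * (i1 (A j) * i2 (x j)))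
           = i1 (Ed j (Suc i) * K (wneg (degx n j))) * i2 (x j)"
          unfolding term_gen[OF m KA[unfolded Ka_def]] bA powi1
          by (simp add: cx mult.assoc[symmetric] PQ i2_z)
      qed
      have "D (x i) = i1 (K (wneg (degx n i))) * i2 (x i) + i1 (x i)
          + sc (qhat q) * (i1 (Ed (Suc i) (Suc i) * K (wneg (degx n (Suc i)))) * i2 (x (Suc i)))
          + sc (qhat q) * (\<Sum>j\<in>{Suc (Suc i)..n}. i1 (Ed j (Suc i) * K (wneg (degx n j))) * i2 (x j))"
        unfolding xi B f1 T3 T4 TS by (simp add: u_def a_def m_def)
      also have "\<dots> = i1 (K (wneg (degx n i))) * i2 (x i) + i1 (x i)
          + sc (qhat q) * (\<Sum>j\<in>{i+1..n}. i1 (Ed j (i+1) * K (wneg (degx n j))) * i2 (x j))"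
        using i by (simp add: sum.atLeast_Suc_atMost distrib_left add.assoc)
      finally show "D (x i) = i1 (K (wneg (degx n i))) * i2 (x i) + i1 (x i)
          + sc (qhat q) * (\<Sum>j\<in>{i+1..n}. i1 (Ed j (i+1) * K (wneg (degx n j))) * i2 (x j))" .
    qed
  qed
  then show ?thesis using i0 by simp
qed

end

context L begin

lemma cl: "w * (sa c * z) = sa c * (w * z)"
  by (metis mult.assoc sa_c)
lemma PQ2: "P * (Q * z) = z" "Q * (P * z) = z"
  by (simp_all add: mult.assoc[symmetric] PQ QP)

definition srl :: "'a \<Rightarrow> 'a \<Rightarrow> 'a" where
  "srl a b = Q * (b * (a * b)) + P * (b * (a * b)) - a * (b * b) - b * (b * a)"

lemma srl_id1: "bra a b * b - Q * (b * bra a b) = - srl a b"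
  unfolding srl_def br_def by (simp add: algebra_simps cl[of b] PQ2)
lemma srl_id2: "b * bra b a - Q * bra b a * b = - srl a b"
  unfolding srl_def br_def by (simp add: algebra_simps cl[of b] PQ2)

lemma srl_serre: "a \<in> {1..n+1} \<Longrightarrow> b \<in> {1..n+1} \<Longrightarrow> inner n (alpha b) (alpha a) = -1 \<Longrightarrow> srl (E a) (E b) = 0"
  using serreE[of b a] srl_id2[of "E b" "E a"] by simp

lemma srl_use: "srl a b = 0 \<Longrightarrow> bra a b * b = Q * (b * bra a b)"
  using srl_id1[of a b] by simp

lemma Lident:
  fixes v b c :: 'a
  shows "(Q + P) * (bra (bra v b) c * b - b * bra (bra v b) c) =
    v * srl c b + P * (P * (c * srl v b)) - srl v b * c - P * (P * (srl c b * v)) + (v * c - c * v) * (b * b) + P * (P * (b * (b * (v * c - c * v))))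
    - b * ((v * c - c * v) * b) - P * (P * (b * ((v * c - c * v) * b)))"
  unfolding srl_def br_def
  by (simp add: algebra_simps cl[of b] cl[of c] cl[of v] PQ2)

lemma QP_inv: "sa (inverse (q + inverse q)) * (Q + P) = 1"
proof -
  have "q + inverse q \<noteq> 0"
  proof
    assume h: "q + inverse q = 0"
    then have "q * q = -1" using q0 by (simp add: field_simps) (metis add_eq_0_iff mult.commute)
    then have "q ^ 4 = 1" by (simp add: power4_eq_xxxx)
    then show False using qroot by auto
  qed
  then show ?thesis by (simp flip: sa_mult sa_add add: sa_one)
qed

lemma Lcomm:
  assumes "v * c = c * v" "srl v b = 0" "srl c b = 0"
  shows "bra (bra v b) c * b = b * bra (bra v b) c"
proof -
  have "(Q + P) * (bra (bra v b) c * b - b * bra (bra v b) c) = 0"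
    unfolding Lident using assms by simp
  then have "sa (inverse (q + inverse q)) * (Q + P) * (bra (bra v b) c * b - b * bra (bra v b) c) = 0"
    by (simp add: mult.assoc)
  then show ?thesis unfolding QP_inv by simp
qed

lemma Lconj_id: "u * b = b * u \<Longrightarrow> srl (bra u a) b = u * srl a b - P * (srl a b * u)"
proof -
  assume h: "u * b = b * u"
  have h2: "b * (u * z) = u * (b * z)" for z by (metis h mult.assoc)
  show ?thesis unfolding srl_def br_def
    by (simp add: algebra_simps cl[of b] cl[of a] cl[of u] PQ2 h[symmetric] h2)
qed

end

context L begin

lemma commE': "2 \<le> a \<Longrightarrow> a + 1 < b \<Longrightarrow> b \<le> n + 1 \<Longrightarrow> E a * E b = E b * E a"
  by (intro commE inner_alpha_far) auto

lemma comm1: "4 \<le> b \<Longrightarrow> b \<le> n + 1 \<Longrightarrow> E 1 * E b = E b * E 1"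
  by (rule commE) (auto simp: inner_simps alpha_def)

lemma C3: "1 \<le> i \<Longrightarrow> i < n \<Longrightarrow> srl (x (Suc i)) (E (Suc i)) = 0"
proof -
  assume i: "1 \<le> i" "i < n"
  show ?thesis
  proof (cases "Suc i = n")
    case True
    have "inner n (alpha n) (alpha (n+1)) = -1" using n3 by (auto simp: inner_simps alpha_def)
    then have "srl (E (n+1)) (E n) = 0" using n3 by (intro srl_serre) auto
    then show ?thesis using True x_n by simp
  next
    case False
    then have lt: "Suc i < n" using i by simp
    have xs: "x (Suc i) = bra (x (Suc (Suc i))) (E (Suc (Suc i)))" using x_step[OF lt] .
    have cu: "E (Suc i) * x (Suc (Suc i)) = x (Suc (Suc i)) * E (Suc i)"
      using lt i by (intro comm_x commE') auto
    have s0: "srl (E (Suc (Suc i))) (E (Suc i)) = 0"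
      using lt i by (intro srl_serre) (auto simp: inner_simps alpha_def)
    show ?thesis unfolding xs Lconj_id[OF cu[symmetric]] s0 by simp
  qed
qed

lemma C3': "1 \<le> i \<Longrightarrow> i < n \<Longrightarrow> x i * E (Suc i) = Q * (E (Suc i) * x i)"
  using x_step[of i] srl_use[OF C3] by simp

lemma C2: "1 \<le> j \<Longrightarrow> j < i \<Longrightarrow> i < n \<Longrightarrow> x j * E (Suc i) = E (Suc i) * x j"
proof (induction "i - Suc j" arbitrary: j)
  case 0
  then have ij: "i = Suc j" by simp
  have xj: "x j = bra (bra (x (Suc i)) (E (Suc i))) (E i)"
    using x_step[of j] x_step[of i] 0 ij by simp
  have cu: "E i * x (Suc i) = x (Suc i) * E i"
    using 0 ij by (intro comm_x commE') auto
  have s1: "srl (x (Suc i)) (E (Suc i)) = 0" using C3[of i] 0 ij by simp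
  have s2: "srl (E i) (E (Suc i)) = 0"
    using 0 ij by (intro srl_serre) (auto simp: inner_simps alpha_def)
  show ?case unfolding xj by (rule Lcomm[OF cu[symmetric] s1 s2])
next
  case (Suc d)
  then have lt: "Suc j < i" by simp
  have IH: "x (Suc j) * E (Suc i) = E (Suc i) * x (Suc j)"
    using Suc.hyps(1)[of "Suc j"] Suc.hyps(2) Suc.prems lt by simp
  have ce: "E (Suc i) * E (Suc j) = E (Suc j) * E (Suc i)"
    using commE'[of "Suc j" "Suc i"] Suc.prems lt by simp
  have xj: "x j = bra (x (Suc j)) (E (Suc j))" using x_step[of j] Suc.prems by simp
  have "E (Suc i) * x j = x j * E (Suc i)"
    unfolding xj by (intro comm_br IH[symmetric] ce)
  then show ?case by simp
qed

lemma y_1: "y 1 = bra (x 2) (E 1)" by simp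
lemma y_step: "1 \<le> i \<Longrightarrow> y (Suc i) = bra (y i) (E (Suc i))"
  by (cases i) auto

lemma C4: "1 \<le> j \<Longrightarrow> j < i \<Longrightarrow> i < n \<Longrightarrow> y j * E (Suc i) = E (Suc i) * y j"
proof (induction j)
  case 0
  then show ?case by simp
next
  case (Suc j)
  show ?case
  proof (cases "j = 0")
    case True
    show ?thesis
    proof (cases "i = 2")
      case True
      have y1: "y (Suc j) = bra (bra (x 3) (E 3)) (E 1)"
        using \<open>j = 0\<close> x_step[of 2] n3 by (simp add: numeral_eq_Suc)
      have cu: "E 1 * x 3 = x 3 * E 1"
        using n3 by (intro comm_x comm1) auto
      have s1: "srl (x 3) (E 3) = 0" using C3[of 2] n3 by (simp add: numeral_eq_Suc)
      have s2: "srl (E 1) (E 3) = 0"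
        using n3 by (intro srl_serre) (auto simp: inner_simps alpha_def)
      show ?thesis unfolding y1 using Lcomm[OF cu[symmetric] s1 s2] True by (simp add: numeral_eq_Suc)
    next
      case False
      then have i3: "3 \<le> i" using Suc.prems \<open>j = 0\<close> by simp
      have c2: "x 2 * E (Suc i) = E (Suc i) * x 2" using C2[of 2 i] i3 Suc.prems by simp
      have c1: "E (Suc i) * E 1 = E 1 * E (Suc i)" using comm1[of "Suc i"] i3 Suc.prems by simp
      have "E (Suc i) * bra (x 2) (E 1) = bra (x 2) (E 1) * E (Suc i)"
        by (intro comm_br c2[symmetric] c1)
      then show ?thesis using \<open>j = 0\<close> by simp
    qed
  next
    case False
    then have j1: "1 \<le> j" by simp
    have IH: "y j * E (Suc i) = E (Suc i) * y j" using Suc j1 by simp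
    have ce: "E (Suc i) * E (Suc j) = E (Suc j) * E (Suc i)"
      using commE'[of "Suc j" "Suc i"] Suc.prems j1 by simp
    have "E (Suc i) * y (Suc j) = y (Suc j) * E (Suc i)"
      unfolding y_step[OF j1] by (intro comm_br IH[symmetric] ce)
    then show ?thesis by simp
  qed
qed

end

context L begin

abbreviation "ep i j \<equiv> eps sa q E T i j"

lemma T_Ed: "3 \<le> s \<Longrightarrow> s \<le> j \<Longrightarrow> j \<le> n \<Longrightarrow> T (Suc j) (Ed j s) = Ed (Suc j) s"
proof (induction "j - s" arbitrary: s)
  case 0
  then have sj: "s = j" by simp
  have "T (Suc j) (E j) = bra (E (Suc j)) (E j)"
    using 0 sj by (intro T_E1) (auto simp: inner_simps alpha_def)
  then show ?case using sj Ed_step[of j "Suc j"] by (simp add: Ed_rr)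
next
  case (Suc d)
  then have s: "s < j" by simp
  have IH: "T (Suc j) (Ed j (Suc s)) = Ed (Suc j) (Suc s)" using Suc.hyps(1)[of "Suc s"] Suc.hyps(2) Suc.prems s by simp
  have TE: "T (Suc j) (E s) = E s"
    using Suc.prems s by (intro T_E0) (auto simp: inner_simps alpha_def)
  have "T (Suc j) (Ed j s) = bra (Ed (Suc j) (Suc s)) (E s)"
    using Ed_step[OF s] T_br[of "Suc j"] IH TE Suc.prems by simp
  then show ?case using Ed_step[of s "Suc j"] s by simp
qed

lemma TchE: "3 \<le> j \<Longrightarrow> j \<le> n \<Longrightarrow> Tch T j (E 1) = bra (Ed j 3) (E 1)"
proof (induction j rule: nat_induct_at_least[of 3])
  case base
  have T2: "T 2 (E 1) = E 1" using n3 by (intro T_E0) (auto simp: inner_simps alpha_def)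
  have T3: "T 3 (E 1) = bra (E 3) (E 1)" using n3 by (intro T_E1) (auto simp: inner_simps alpha_def)
  show ?case using T2 T3 by (simp add: numeral_eq_Suc Ed_rr)
next
  case (Suc j)
  then have IH: "Tch T j (E 1) = bra (Ed j 3) (E 1)" by simp
  obtain m where jm: "j = Suc m" using Suc by (cases j) auto
  have "Tch T (Suc j) (E 1) = T (Suc j) (Tch T j (E 1))" using jm by simp
  also have "\<dots> = bra (T (Suc j) (Ed j 3)) (T (Suc j) (E 1))" using IH T_br[of "Suc j"] Suc by simp
  also have "T (Suc j) (E 1) = E 1" using Suc by (intro T_E0) (auto simp: inner_simps alpha_def)
  also have "T (Suc j) (Ed j 3) = Ed (Suc j) 3" using Suc by (intro T_Ed) auto
  finally show ?case .
qed

lemma ep11: "ep 1 1 = 0" by simp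
lemma ep12: "ep 1 2 = E 1"
proof -
  have "T 2 (E 1) = E 1" using n3 by (intro T_E0) (auto simp: inner_simps alpha_def)
  then show ?thesis by (simp add: numeral_eq_Suc)
qed
lemma ep1j: "3 \<le> j \<Longrightarrow> j \<le> n \<Longrightarrow> ep 1 j = bra (Ed j 3) (E 1)"
  using TchE by simp

lemma ep_diag: "1 \<le> i \<Longrightarrow> ep (Suc i) (Suc i) = Q * ep i (Suc i) * E (Suc i) - P * (E (Suc i) * ep i (Suc i))"
  by (cases i) auto
lemma ep_sub: "1 \<le> i \<Longrightarrow> ep (Suc i) i = ep i (Suc i) + P * (ep i i * E (Suc i) - E (Suc i) * ep i i)"
  by (cases i) auto
lemma ep_gen: "1 \<le> i \<Longrightarrow> j \<noteq> Suc i \<Longrightarrow> j \<noteq> i \<Longrightarrow> ep (Suc i) j = bra (ep i j) (E (Suc i))"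
  by (cases i) auto

lemma wt_eps: "1 \<le> i \<Longrightarrow> i \<le> n \<Longrightarrow> 1 \<le> j \<Longrightarrow> j \<le> n \<Longrightarrow> wt_hom (ep i j) (wadd (unitv i) (unitv j))"
proof (induction i arbitrary: j rule: nat_induct_at_least[of 1])
  case base
  show ?case
  proof (cases "j = 1")
    case True then show ?thesis by (simp add: wt_0)
  next
    case False
    show ?thesis
    proof (cases "j = 2")
      case True
      show ?thesis unfolding True ep12 using wt_E[of 1] n3 by (simp add: alpha_def)
    next
      case False
      then have j3: "3 \<le> j" using \<open>j \<noteq> 1\<close> base by simp
      have "wt_hom (bra (Ed j 3) (E 1)) (wadd (wadd (unitv j) (wneg (unitv (3 - 1)))) (alpha 1))"
        using j3 base n3 by (intro wt_br wt_Ed wt_E) auto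
      moreover have "wadd (wadd (unitv j) (wneg (unitv (3 - 1)))) (alpha 1) = wadd (unitv 1) (unitv j)"
        using j3 by (auto simp: fun_eq_iff wadd_def wneg_def unitv_def alpha_def)
      ultimately show ?thesis using ep1j[OF j3] base by simp
    qed
  qed
next
  case (Suc i)
  have i: "1 \<le> i" "Suc i \<le> n" using Suc by auto
  have IH: "\<And>j. 1 \<le> j \<Longrightarrow> j \<le> n \<Longrightarrow> wt_hom (ep i j) (wadd (unitv i) (unitv j))" using Suc i by simp
  have Ea: "wt_hom (E (Suc i)) (wadd (unitv (Suc i)) (wneg (unitv i)))"
    using wt_E[of "Suc i"] i by (simp add: alpha_def)
  show ?case
  proof (cases "j = Suc i")
    case True
    have I1: "wt_hom (ep i (Suc i)) (wadd (unitv i) (unitv (Suc i)))" using IH[of "Suc i"] i by simp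
    have w1: "wt_hom (Q * ep i (Suc i) * E (Suc i)) (wadd (wadd (unitv i) (unitv (Suc i))) (wadd (unitv (Suc i)) (wneg (unitv i))))"
      by (rule wt_mult[OF wt_scal[OF I1] Ea])
    have w2: "wt_hom (E (Suc i) * ep i (Suc i)) (wadd (wadd (unitv i) (unitv (Suc i))) (wadd (unitv (Suc i)) (wneg (unitv i))))"
      using wt_mult[OF Ea I1] by (simp add: wadd_comm)
    have "wt_hom (Q * ep i (Suc i) * E (Suc i) - P * (E (Suc i) * ep i (Suc i)))
       (wadd (wadd (unitv i) (unitv (Suc i))) (wadd (unitv (Suc i)) (wneg (unitv i))))"
      by (rule wt_diff[OF w1 wt_scal[OF w2]])
    moreover have "wadd (wadd (unitv i) (unitv (Suc i))) (wadd (unitv (Suc i)) (wneg (unitv i))) = wadd (unitv (Suc i)) (unitv j)"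
      using True by (auto simp: fun_eq_iff wadd_def wneg_def unitv_def)
    ultimately show ?thesis using ep_diag[OF i(1)] True by simp
  next
    case False
    show ?thesis
    proof (cases "j = i")
      case True
      have w1: "wt_hom (ep i (Suc i)) (wadd (unitv (Suc i)) (unitv j))"
        using IH[of "Suc i"] i True by (simp add: wadd_comm)
      have w2: "wt_hom (ep i i * E (Suc i) - E (Suc i) * ep i i) (wadd (unitv (Suc i)) (unitv j))"
      proof (intro wt_diff)
        have "wt_hom (ep i i * E (Suc i)) (wadd (wadd (unitv i) (unitv i)) (wadd (unitv (Suc i)) (wneg (unitv i))))"
          using i by (intro wt_mult IH Ea) auto
        moreover have "wadd (wadd (unitv i) (unitv i)) (wadd (unitv (Suc i)) (wneg (unitv i))) = wadd (unitv (Suc i)) (unitv j)"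
          using True by (auto simp: fun_eq_iff wadd_def wneg_def unitv_def)
        ultimately show "wt_hom (ep i i * E (Suc i)) (wadd (unitv (Suc i)) (unitv j))" by simp
        have "wt_hom (E (Suc i) * ep i i) (wadd (wadd (unitv (Suc i)) (wneg (unitv i))) (wadd (unitv i) (unitv i)))"
          using i by (intro wt_mult IH Ea) auto
        moreover have "wadd (wadd (unitv (Suc i)) (wneg (unitv i))) (wadd (unitv i) (unitv i)) = wadd (unitv (Suc i)) (unitv j)"
          using True by (auto simp: fun_eq_iff wadd_def wneg_def unitv_def)
        ultimately show "wt_hom (E (Suc i) * ep i i) (wadd (unitv (Suc i)) (unitv j))" by simp
      qed
      show ?thesis using ep_sub[OF i(1)] True wt_add[OF w1 wt_scal[OF w2]] by simp
    next
      case False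
      have "wt_hom (bra (ep i j) (E (Suc i))) (wadd (wadd (unitv i) (unitv j)) (wadd (unitv (Suc i)) (wneg (unitv i))))"
        using Suc.prems by (intro wt_br IH Ea) auto
      moreover have "wadd (wadd (unitv i) (unitv j)) (wadd (unitv (Suc i)) (wneg (unitv i))) = wadd (unitv (Suc i)) (unitv j)"
        by (auto simp: fun_eq_iff wadd_def wneg_def unitv_def)
      ultimately show ?thesis using ep_gen[OF i(1) \<open>j \<noteq> Suc i\<close> False] by simp
    qed
  qed
qed

lemma Eu_ss: "Eu s s = E s" by (simp add: Eup_def)
lemma Eu_step: "s \<le> r \<Longrightarrow> Eu s (Suc r) = bra (Eu s r) (E (Suc r))"
proof -
  assume "s \<le> r"
  then have "Suc r - s = Suc (r - s)" "s + Suc (r - s) = Suc r" by auto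
  then show ?thesis by (simp add: Eup_def)
qed

lemma wt_Eu: "s \<le> r \<Longrightarrow> 2 \<le> s \<Longrightarrow> r \<le> n + 1 \<Longrightarrow> wt_hom (Eu s r) (wadd (unitv r) (wneg (unitv (s - 1))))"
proof (induction r rule: nat_induct_at_least)
  case base
  then show ?case using wt_E[of s] by (simp add: Eu_ss alpha_def)
next
  case (Suc r)
  have "wt_hom (bra (Eu s r) (E (Suc r))) (wadd (wadd (unitv r) (wneg (unitv (s - 1)))) (alpha (Suc r)))"
    using Suc by (intro wt_br wt_E) auto
  moreover have "wadd (wadd (unitv r) (wneg (unitv (s - 1)))) (alpha (Suc r)) = wadd (unitv (Suc r)) (wneg (unitv (s - 1)))"
    using Suc by (auto simp: fun_eq_iff wadd_def wneg_def unitv_def alpha_def)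
  ultimately show ?case using Eu_step[OF Suc(1)] by simp
qed

lemma wt_y: "1 \<le> i \<Longrightarrow> i \<le> n \<Longrightarrow> wt_hom (y i) (degy n i)"
proof (induction i rule: nat_induct_at_least[of 1])
  case base
  have "wt_hom (bra (x 2) (E 1)) (wadd (degx n 2) (alpha 1))"
    using n3 by (intro wt_br wt_x wt_E) auto
  moreover have "wadd (degx n 2) (alpha 1) = degy n 1"
    using n3 by (auto simp: fun_eq_iff wadd_def wneg_def unitv_def alpha_def degx_def degy_def)
  ultimately show ?case by simp
next
  case (Suc i)
  have "wt_hom (bra (y i) (E (Suc i))) (wadd (degy n i) (alpha (Suc i)))"
    using Suc by (intro wt_br wt_E) auto
  moreover have "wadd (degy n i) (alpha (Suc i)) = degy n (Suc i)"
    using Suc by (auto simp: fun_eq_iff wadd_def wneg_def unitv_def alpha_def degy_def)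
  ultimately show ?case using y_step[OF Suc(1)] by simp
qed

end

context L begin

definition YR :: "nat \<Rightarrow> 'c" where
  "YR i = i1 (K (wneg (degy n i))) * i2 (y i) + i1 (y i) + sc (qhat q) * ((\<Sum>j\<in>{1..n}. i1 (ep i j * K (wneg (degx n j))) * i2 (x j))
     + (\<Sum>j\<in>{1..i-1}. i1 (Eu (j+1) i * K (wneg (degy n j))) * i2 (y j)))"

lemma YF1: "D (y 1) = YR 1"
proof -
  define u where "u = x 2"
  define a where "a = degx n 2"
  define Ka where "Ka = K (wneg (alpha 1))"
  define A where "A j = Ed j 3 * K (wneg (degx n j))" for j
  define R where "R = sc (qhat q) * (\<Sum>j\<in>{3..n}. i1 (A j) * i2 (x j))"
  have m: "(1::nat) \<in> {1..n+1}" by simp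
  have aQ: "a \<in> QD n" using n3 by (simp add: a_def QD_degx)
  have Du: "D u = i1 (K (wneg a)) * i2 u + i1 u + R"
    using XF[of 2] n3 by (simp add: u_def a_def R_def A_def numeral_eq_Suc)
  note B = bracket[OF Du aQ m]
  have yi: "y 1 = bra u (E 1)" by (simp add: u_def)
  have f1: "wadd a (alpha 1) = degy n 1"
    using n3 by (auto simp: fun_eq_iff wadd_def wneg_def unitv_def alpha_def degx_def degy_def a_def)
  have f2: "K (wneg a) * E 1 = Q * (E 1 * K (wneg a))"
  proof -
    have "inner n (wneg a) (alpha 1) = 1" using n3 by (simp add: inner_simps a_def degx_def alpha_def)
    then show ?thesis using KE[OF QD_wneg[OF aQ] m] by simp
  qed
  have T3: "i1 (K (wneg a) * E 1 - P * (E 1 * K (wneg a))) * i2 u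
      = sc (qhat q) * (i1 (E 1 * K (wneg a)) * i2 u)"
    unfolding f2 by (simp add: left_diff_distrib[symmetric] sa_diff[symmetric] i1_mult i1_sa qhat_def mult.assoc)
  have f3: "Ka * u = Q * (u * Ka)"
  proof -
    have "inner n (wneg (alpha 1)) (degx n 2) = 1" using n3 by (simp add: inner_simps degx_def alpha_def)
    then show ?thesis
      using wt_use[OF wt_x[of 2] QD_wneg[OF QD_alpha[OF _ m]]] n3 by (simp add: u_def Ka_def)
  qed
  have T4: "i1 (u * K (wneg (alpha 1)) - P * (K (wneg (alpha 1)) * u)) * i2 (E 1) = 0"
    unfolding Ka_def[symmetric] f3 by (simp add: mult.assoc[symmetric] PQ i1_z)
  have TS: "R * D (E 1) - sc (inverse q) * (D (E 1) * R)
      = sc (qhat q) * (\<Sum>j\<in>{3..n}. i1 (bra (Ed j 3) (E 1) * K (wneg (degx n j))) * i2 (x j))"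
    unfolding R_def sum_bracket[OF m]
  proof (rule arg_cong[where f = "\<lambda>z. sc (qhat q) * z"], rule sum.cong[OF refl])
    fix j assume j: "j \<in> {3..n}"
    have jQ: "wneg (degx n j) \<in> QD n" using j by (intro QD_wneg QD_degx) auto
    have KA: "Ka * A j = sa (q powi 1) * (A j * Ka)"
    proof -
      have "inner n (wneg (alpha 1)) (wadd (unitv j) (wneg (unitv (3 - 1)))) = 1"
        using j by (simp add: inner_simps alpha_def)
      then show ?thesis unfolding A_def Ka_def
        using wt_use[OF wt_CK[OF wt_Ed[of 3 j] jQ] QD_wneg[OF QD_alpha[OF _ m]]] j n3 by simp
    qed
    have cx: "E 1 * x j = x j * E 1"
      using j by (intro comm_x comm1) auto
    have KdE: "K (wneg (degx n j)) * E 1 = sa (q powi 0) * (E 1 * K (wneg (degx n j)))"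
    proof -
      have "inner n (wneg (degx n j)) (alpha 1) = 0" using j by (simp add: inner_simps degx_def alpha_def)
      then show ?thesis using KE[OF jQ m] by simp
    qed
    have bA: "bra (A j) (E 1) = bra (Ed j 3) (E 1) * K (wneg (degx n j))"
      unfolding A_def braK[OF KdE] powi0 by (simp add: br_def)
    show "i1 (A j) * i2 (x j) * D (E 1) - sc (inverse q) * (D (E 1) * (i1 (A j) * i2 (x j)))
       = i1 (bra (Ed j 3) (E 1) * K (wneg (degx n j))) * i2 (x j)"
      unfolding term_gen[OF m KA[unfolded Ka_def]] bA powi1
      by (simp add: cx[simplified] mult.assoc[symmetric] PQ i2_z)
  qed
  have D1: "D (y 1) = i1 (K (wneg (degy n 1))) * i2 (y 1) + i1 (y 1)
      + sc (qhat q) * (i1 (E 1 * K (wneg (degx n 2))) * i2 (x 2))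
      + sc (qhat q) * (\<Sum>j\<in>{3..n}. i1 (bra (Ed j 3) (E 1) * K (wneg (degx n j))) * i2 (x j))"
    unfolding yi B f1 T3 T4 TS by (simp add: u_def a_def)
  define f where "f j = i1 (ep 1 j * K (wneg (degx n j))) * i2 (x j)" for j
  have s1: "(\<Sum>j\<in>{1..n}. f j) = f 1 + (\<Sum>j\<in>{2..n}. f j)"
    using n3 sum.atLeast_Suc_atMost[of 1 n f] by (simp add: numeral_eq_Suc)
  have s2: "(\<Sum>j\<in>{2..n}. f j) = f 2 + (\<Sum>j\<in>{3..n}. f j)"
    using n3 sum.atLeast_Suc_atMost[of 2 n f] by (simp add: numeral_eq_Suc)
  have s3: "(\<Sum>j\<in>{3..n}. f j) = (\<Sum>j\<in>{3..n}. i1 (bra (Ed j 3) (E 1) * K (wneg (degx n j))) * i2 (x j))"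
    by (rule sum.cong[OF refl]) (simp add: f_def ep1j[unfolded One_nat_def] del: eps.simps)
  have "(\<Sum>j\<in>{1..n}. f j) = i1 (E 1 * K (wneg (degx n 2))) * i2 (x 2)
      + (\<Sum>j\<in>{3..n}. i1 (bra (Ed j 3) (E 1) * K (wneg (degx n j))) * i2 (x j))"
    unfolding s1 s2 s3 by (simp add: f_def ep12[unfolded One_nat_def] ep11[unfolded One_nat_def] i1_z del: eps.simps)
  then show ?thesis unfolding D1 YR_def f_def[symmetric]
    by (simp add: distrib_left add.assoc)
qed

lemma sum_last: fixes i :: nat shows "1 \<le> i \<Longrightarrow> (\<Sum>j\<in>{1..i}. f j) = (\<Sum>j\<in>{1..i-1}. f j) + (f i :: 'c)"
proof -
  assume "1 \<le> i"
  then obtain k where k: "i = Suc k" by (cases i) auto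
  show ?thesis unfolding k by (simp add: sum.cl_ivl_Suc)
qed

lemma Rlin: "(R1 + R2) * d - sc (inverse q) * (d * (R1 + R2)) = (R1 * d - sc (inverse q) * (d * R1)) + (R2 * d - sc (inverse q) * (d * R2))"
  by (simp add: algebra_simps)

lemma sum_two: fixes A :: "nat set" shows "finite A \<Longrightarrow> a \<in> A \<Longrightarrow> b \<in> A \<Longrightarrow> a \<noteq> b \<Longrightarrow> (\<And>j. j \<in> A \<Longrightarrow> j \<noteq> a \<Longrightarrow> j \<noteq> b \<Longrightarrow> h j = g j)
   \<Longrightarrow> h a + h b = g a + g b \<Longrightarrow> sum h A = (sum g A :: 'c)"
proof -
  assume A: "finite A" "a \<in> A" "b \<in> A" "a \<noteq> b" and e: "\<And>j. j \<in> A \<Longrightarrow> j \<noteq> a \<Longrightarrow> j \<noteq> b \<Longrightarrow> h j = g j"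
    and ab: "h a + h b = g a + g b"
  have 1: "sum f A = f a + (f b + sum f (A - {a} - {b}))" for f :: "nat \<Rightarrow> 'c"
    using A by (simp add: sum.remove[of A a] sum.remove[of "A - {a}" b])
  have "sum h (A - {a} - {b}) = sum g (A - {a} - {b})" using e by (intro sum.cong) auto
  then show ?thesis unfolding 1[of h] 1[of g] using ab by (simp add: add.assoc[symmetric])
qed

lemma YFstep: assumes i: "1 \<le> i" "Suc i \<le> n" and IH: "D (y i) = YR i"
  shows "D (y (Suc i)) = YR (Suc i)"
proof -
  define u where "u = y i"
  define a where "a = degy n i"
  define m where "m = Suc i"
  define Ka where "Ka = K (wneg (alpha m))"
  define AX where "AX j = ep i j * K (wneg (degx n j))" for j
  define AY where "AY j = Eu (j+1) i * K (wneg (degy n j))" for j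
  define RX where "RX = sc (qhat q) * (\<Sum>j\<in>{1..n}. i1 (AX j) * i2 (x j))"
  define RY where "RY = sc (qhat q) * (\<Sum>j\<in>{1..i-1}. i1 (AY j) * i2 (y j))"
  have mm: "m \<in> {1..n+1}" using i by (simp add: m_def)
  have aQ: "a \<in> QD n" using i by (simp add: a_def QD_degy)
  have Du: "D u = i1 (K (wneg a)) * i2 u + i1 u + (RX + RY)"
    using IH by (simp add: u_def a_def RX_def RY_def AX_def AY_def YR_def distrib_left)
  note B = bracket[OF Du aQ mm]
  have yi: "y (Suc i) = bra u (E m)" using y_step[OF i(1)] by (simp add: u_def m_def)
  have f1: "wadd a (alpha m) = degy n (Suc i)"
    using i by (auto simp: fun_eq_iff wadd_def wneg_def unitv_def alpha_def degy_def a_def m_def)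
  have f2: "K (wneg a) * E m = Q * (E m * K (wneg a))"
  proof -
    have "inner n (wneg a) (alpha m) = 1" using i by (simp add: inner_simps a_def degy_def alpha_def m_def)
    then show ?thesis using KE[OF QD_wneg[OF aQ] mm] by simp
  qed
  have T3: "i1 (K (wneg a) * E m - P * (E m * K (wneg a))) * i2 u
      = sc (qhat q) * (i1 (Eu (Suc i) (Suc i) * K (wneg a)) * i2 u)"
    unfolding f2 Eu_ss by (simp add: left_diff_distrib[symmetric] sa_diff[symmetric] i1_mult i1_sa qhat_def mult.assoc m_def)
  have f3: "Ka * u = Q * (u * Ka)"
  proof -
    have "inner n (wneg (alpha m)) (degy n i) = 1" using i by (simp add: inner_simps degy_def alpha_def m_def)
    then show ?thesis
      using wt_use[OF wt_y[of i] QD_wneg[OF QD_alpha[OF _ mm]]] i n3 by (simp add: u_def Ka_def)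
  qed
  have T4: "i1 (u * K (wneg (alpha m)) - P * (K (wneg (alpha m)) * u)) * i2 (E m) = 0"
    unfolding Ka_def[symmetric] f3 by (simp add: mult.assoc[symmetric] PQ i1_z)
  have TY: "RY * D (E m) - sc (inverse q) * (D (E m) * RY)
      = sc (qhat q) * (\<Sum>j\<in>{1..i-1}. i1 (Eu (j+1) (Suc i) * K (wneg (degy n j))) * i2 (y j))"
    unfolding RY_def sum_bracket[OF mm]
  proof (rule arg_cong[where f = "\<lambda>z. sc (qhat q) * z"], rule sum.cong[OF refl])
    fix j assume j: "j \<in> {1..i-1}"
    have jQ: "wneg (degy n j) \<in> QD n" using j i by (intro QD_wneg QD_degy) auto
    have ji: "j + 1 \<le> i" "2 \<le> j + 1" "i \<le> n + 1" "1 \<le> n" using j i by auto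
    have inn: "inner n (wneg (alpha m)) (wadd (unitv i) (wneg (unitv (j + 1 - 1)))) = 1"
      using j i by (auto simp: inner_simps alpha_def m_def)
    have KA: "Ka * AY j = sa (q powi 1) * (AY j * Ka)"
      unfolding AY_def Ka_def
      by (rule wt_use[OF wt_CK[OF wt_Eu[OF ji(1) ji(2) ji(3)] jQ] QD_wneg[OF QD_alpha[OF ji(4) mm]] inn])
    have cy: "y j * E m = E m * y j" using C4[of j i] ji i by (simp add: m_def)
    have KdE: "K (wneg (degy n j)) * E m = sa (q powi 0) * (E m * K (wneg (degy n j)))"
    proof -
      have "inner n (wneg (degy n j)) (alpha m) = 0" using ji i by (auto simp: inner_simps degy_def alpha_def m_def)
      then show ?thesis using KE[OF jQ mm] by simp
    qed
    have bA: "bra (AY j) (E m) = Eu (j+1) (Suc i) * K (wneg (degy n j))"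
      unfolding AY_def braK[OF KdE] powi0 using Eu_step[of "j+1" i] ji by (simp add: br_def m_def)
    show "i1 (AY j) * i2 (y j) * D (E m) - sc (inverse q) * (D (E m) * (i1 (AY j) * i2 (y j)))
       = i1 (Eu (j+1) (Suc i) * K (wneg (degy n j))) * i2 (y j)"
      unfolding term_gen[OF mm KA[unfolded Ka_def]] bA powi1
      by (simp add: cy mult.assoc[symmetric] PQ i2_z)
  qed
  define h where "h j = i1 (AX j) * i2 (x j) * D (E m) - sc (inverse q) * (D (E m) * (i1 (AX j) * i2 (x j)))" for j
  define g where "g j = i1 (ep (Suc i) j * K (wneg (degx n j))) * i2 (x j)" for j
  have wAX: "\<And>j. 1 \<le> j \<Longrightarrow> j \<le> n \<Longrightarrow> wt_hom (AX j) (wadd (unitv i) (unitv j))"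
    unfolding AX_def using i by (intro wt_CK wt_eps QD_wneg QD_degx) auto
  have KAX: "\<And>j k. 1 \<le> j \<Longrightarrow> j \<le> n \<Longrightarrow> inner n (wneg (alpha m)) (wadd (unitv i) (unitv j)) = k
      \<Longrightarrow> Ka * AX j = sa (q powi k) * (AX j * Ka)"
    unfolding Ka_def using i n3 by (intro wt_use[OF wAX] QD_wneg QD_alpha mm) auto
  have KdEx: "\<And>j k. 1 \<le> j \<Longrightarrow> j \<le> n \<Longrightarrow> inner n (wneg (degx n j)) (alpha m) = k
      \<Longrightarrow> K (wneg (degx n j)) * E m = sa (q powi k) * (E m * K (wneg (degx n j)))"
    using KE mm by (simp add: QD_wneg QD_degx)
  have hg: "\<And>j. j \<in> {1..n} \<Longrightarrow> j \<noteq> i \<Longrightarrow> j \<noteq> Suc i \<Longrightarrow> h j = g j"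
  proof -
    fix j assume j: "j \<in> {1..n}" "j \<noteq> i" "j \<noteq> Suc i"
    have KA: "Ka * AX j = sa (q powi 1) * (AX j * Ka)"
      using j i by (intro KAX) (auto simp: inner_simps alpha_def m_def)
    have cx: "x j * E m = E m * x j"
    proof (cases "j < i")
      case True then show ?thesis using C2[of j i] i j by (simp add: m_def)
    next
      case False
      then have "Suc i < j" using j by simp
      then have "E m * x j = x j * E m" using j i by (intro comm_x commE') (auto simp: m_def)
      then show ?thesis by simp
    qed
    have KdE: "K (wneg (degx n j)) * E m = sa (q powi 0) * (E m * K (wneg (degx n j)))"
      using j i by (intro KdEx) (auto simp: inner_simps degx_def alpha_def m_def)
    have bA: "bra (AX j) (E m) = ep (Suc i) j * K (wneg (degx n j))"
      unfolding AX_def braK[OF KdE] powi0 using ep_gen[OF i(1) j(3) j(2)] by (simp add: br_def m_def)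
    show "h j = g j" unfolding h_def g_def term_gen[OF mm KA[unfolded Ka_def]] bA powi1
      by (simp add: cx mult.assoc[symmetric] PQ i2_z)
  qed
  have hgi: "h i + h (Suc i) = g i + g (Suc i)"
  proof -
    have KA1: "Ka * AX i = sa (q powi 2) * (AX i * Ka)"
      using i by (intro KAX) (auto simp: inner_simps alpha_def m_def)
    have KdE1: "K (wneg (degx n i)) * E m = sa (q powi (-1)) * (E m * K (wneg (degx n i)))"
      using i by (intro KdEx) (auto simp: inner_simps degx_def alpha_def m_def)
    have c3: "x i * E m = Q * (E m * x i)" using C3'[of i] i by (simp add: m_def)
    have iq: "inverse q * (q * q) = q" using q0 by (simp add: mult.assoc[symmetric])
    have "P * sa (q powi 2) = sa (inverse q * (q * q))" by (simp flip: sa_mult add: power2_eq_square)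
    then have P2: "P * sa (q powi 2) = Q" unfolding iq .
    have hi: "h i = i1 ((P * (ep i i * E m) - P * (E m * ep i i)) * K (wneg (degx n i))) * i2 (x i)"
      unfolding h_def term_gen[OF mm KA1[unfolded Ka_def]] c3 P2
      unfolding AX_def braK[OF KdE1] by (simp add: i2_z)
    have KA2: "Ka * AX (Suc i) = sa (q powi 0) * (AX (Suc i) * Ka)"
      using i by (intro KAX) (auto simp: inner_simps alpha_def m_def)
    have KdE2: "K (wneg (degx n (Suc i))) * E m = sa (q powi 1) * (E m * K (wneg (degx n (Suc i))))"
      using i by (intro KdEx) (auto simp: inner_simps degx_def alpha_def m_def)
    have KK: "K (wneg (degx n (Suc i))) * Ka = K (wneg (degx n i))"
    proof -
      have "K (wneg (degx n (Suc i))) * Ka = K (wadd (wneg (degx n (Suc i))) (wneg (alpha m)))"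
        unfolding Ka_def using i n3 by (intro K_mult QD_wneg QD_degx QD_alpha mm) auto
      also have "wadd (wneg (degx n (Suc i))) (wneg (alpha m)) = wneg (degx n i)"
      proof -
        have "wadd (wneg (degx n (Suc i))) (wneg (alpha m)) = wneg (wadd (degx n (Suc i)) (alpha m))"
          by (simp add: fun_eq_iff wadd_def wneg_def)
        then show ?thesis using degx_step[OF i(1)] by (simp add: m_def)
      qed
      finally show ?thesis .
    qed
    have hs: "h (Suc i) = i1 (ep i (Suc i) * K (wneg (degx n i))) * i2 (x i)
        + i1 (ep (Suc i) (Suc i) * K (wneg (degx n (Suc i)))) * i2 (x (Suc i))"
    proof -
      have "x (Suc i) * E m - P * sa (q powi 0) * (E m * x (Suc i)) = x i"
        using x_step[of i] i by (simp add: powi0 br_def m_def sa_one)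
      moreover have "AX (Suc i) * Ka = ep i (Suc i) * K (wneg (degx n i))"
        unfolding AX_def by (simp add: mult.assoc KK)
      moreover have "bra (AX (Suc i)) (E m) = ep (Suc i) (Suc i) * K (wneg (degx n (Suc i)))"
        unfolding AX_def braK[OF KdE2] powi1 ep_diag[OF i(1)] by (simp add: m_def mult.assoc)
      ultimately show ?thesis unfolding h_def term_gen[OF mm KA2[unfolded Ka_def]] Ka_def by simp
    qed
    have gi: "g i = i1 (ep i (Suc i) * K (wneg (degx n i))) * i2 (x i)
        + i1 ((P * (ep i i * E m) - P * (E m * ep i i)) * K (wneg (degx n i))) * i2 (x i)"
      unfolding g_def ep_sub[OF i(1)] by (simp add: m_def distrib_right right_diff_distrib i1_add)
    show ?thesis unfolding hi hs gi by (simp add: g_def add.assoc add.commute add.left_commute)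
  qed
  have TX: "RX * D (E m) - sc (inverse q) * (D (E m) * RX)
      = sc (qhat q) * (\<Sum>j\<in>{1..n}. g j)"
    unfolding RX_def sum_bracket[OF mm] h_def[symmetric]
    using i by (intro arg_cong[where f = "\<lambda>z. sc (qhat q) * z"] sum_two[OF _ _ _ _ hg hgi]) auto
  have "D (y (Suc i)) = i1 (K (wneg (degy n (Suc i)))) * i2 (y (Suc i)) + i1 (y (Suc i))
      + sc (qhat q) * (i1 (Eu (Suc i) (Suc i) * K (wneg (degy n i))) * i2 (y i))
      + (sc (qhat q) * (\<Sum>j\<in>{1..n}. g j)
         + sc (qhat q) * (\<Sum>j\<in>{1..i-1}. i1 (Eu (j+1) (Suc i) * K (wneg (degy n j))) * i2 (y j)))"
    unfolding yi B f1 T3 T4 Rlin TX TY by (simp add: u_def a_def)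
  also have "\<dots> = YR (Suc i)"
    unfolding YR_def g_def using sum_last[OF i(1), of "\<lambda>j. i1 (Eu (j+1) (Suc i) * K (wneg (degy n j))) * i2 (y j)"]
    by (simp add: distrib_left add.assoc add.commute add.left_commute)
  finally show ?thesis .
qed

end

context L begin
lemma YF: "1 \<le> i \<Longrightarrow> i \<le> n \<Longrightarrow> D (y i) = YR i"
proof (induction i rule: nat_induct_at_least)
  case base
  then show ?case using YF1 by simp
next
  case (Suc i)
  then show ?case using YFstep[of i] by simp
qed
end

theorem lemma3p3:
  fixes n :: nat and q :: "'k::field_char_0"
    and sa :: "'k \<Rightarrow> 'a::ring_1" and E F :: "nat \<Rightarrow> 'a" and K :: "wt \<Rightarrow> 'a"
    and T :: "nat \<Rightarrow> 'a \<Rightarrow> 'a"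
    and sc :: "'k \<Rightarrow> 'c::ring_1" and i1 i2 \<Delta> :: "'a \<Rightarrow> 'c"
    and i :: nat
  assumes "alg_closed TYPE('k)"
    and "q \<noteq> 0" and "\<forall>m::nat. m > 0 \<longrightarrow> q ^ m \<noteq> 1"
    and "n \<ge> 3"
    and "kalg sa" and "kalg sc"
    and "Uq_rels n q sa E F K"
    and "lusztig n q sa E F K T"
    and "tensor_data sa sc i1 i2"
    and "coprod n sa sc E K i1 i2 \<Delta>"
    and "i \<in> {1..n}"
  shows "\<Delta> (xv sa q E n i) =
           tens i1 i2 (K (wneg (degx n i))) (xv sa q E n i) + tens i1 i2 (xv sa q E n i) 1
           + sc (qhat q) * (\<Sum>j\<in>{i+1..n}.
                tens i1 i2 (Edown sa q E j (i+1) * K (wneg (degx n j))) (xv sa q E n j))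
       \<and> \<Delta> (yv sa q E n i) =
           tens i1 i2 (K (wneg (degy n i))) (yv sa q E n i) + tens i1 i2 (yv sa q E n i) 1
           + sc (qhat q) * ((\<Sum>j\<in>{1..n}.
                tens i1 i2 (eps sa q E T i j * K (wneg (degx n j))) (xv sa q E n j))
              + (\<Sum>j\<in>{1..i-1}.
                tens i1 i2 (Eup sa q E (j+1) i * K (wneg (degy n j))) (yv sa q E n j)))"
proof -
  interpret L n q sa E F K T sc i1 i2 \<Delta>
    using assms by (unfold_locales) auto
  have i: "1 \<le> i" "i \<le> n" using assms by auto
  show ?thesis
    using XF[OF i] YF[OF i] unfolding tens_def YR_def by (simp add: i2_one)
qed

end
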